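(* Consider the system \[ \begin{aligned} \dot S_h(t)&=\beta_h-C_{vh}\frac{I_v(t)}{N_v(t)}S_h(t)-\mu_hS_h(t),\\ \dot I_h(t)&=C_{vh}\frac{I_v(t-\tau)}{N_v(t-\tau)}S_h(t-\tau)-\mu_hI_h(t),\\ \dot S_v(t)&=\beta_v-C_{hv}I_h(t)S_v(t)-\mu_vS_v(t),\\ \dot I_v(t)&=C_{hv}I_h(t)S_v(t)-\mu_vI_v(t), \end{aligned} \] with $N_v=S_v+I_v$ and positive parameters $\beta_h,\beta_v,\mu_h,\mu_v,C_{vh},C_{hv}$, on the phase space $C_+$. Let $E^0=(\beta_h/\mu_h,0,\beta_v/\mu_v,0)^T$ and $R_0=\sqrt{C_{vh}C_{hv}\beta_h/(\mu_h^2\mu_v)}$. Then for any $\tau\ge0$, $E^0$ is globally asymptotically stable in $C_+$ if $R_0<1$, and globally attractive in $C_+$ if $R_0=1$.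
   Context: $C_+=\{\varphi\in C([-\tau,0],\mathbb{R}_+^4):\varphi_3(\theta)+\varphi_4(\theta)>0\ \forall\theta\in[-\tau,0]\}$ with the sup-norm; the constant function $E^0$ is regarded as an element of $C_+$. Globally attractive means every solution with initial function in $C_+$ converges to $E^0$; globally asymptotically stable means locally (Lyapunov) stable and globally attractive. *)

theory Defs
  imports "HOL-Analysis.Analysis"
begin

text \<open>State vector x = (S_h, I_h, S_v, I_v) as an element of real^4,
  components x$1 = S_h, x$2 = I_h, x$3 = S_v, x$4 = I_v.\<close>

definition E0 :: "real \<Rightarrow> real \<Rightarrow> real \<Rightarrow> real \<Rightarrow> real^4" where
  "E0 \<beta>h \<mu>h \<beta>v \<mu>v = vector [\<beta>h / \<mu>h, 0, \<beta>v / \<mu>v, 0]"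

definition R0 :: "real \<Rightarrow> real \<Rightarrow> real \<Rightarrow> real \<Rightarrow> real \<Rightarrow> real" where
  "R0 \<beta>h \<mu>h \<mu>v Cvh Chv = sqrt (Cvh * Chv * \<beta>h / (\<mu>h\<^sup>2 * \<mu>v))"

text \<open>Right-hand side of the delay system: x is the current state x(t),
  y is the delayed state x(t - tau).\<close>
definition vf :: "real \<Rightarrow> real \<Rightarrow> real \<Rightarrow> real \<Rightarrow> real \<Rightarrow> real \<Rightarrow> real^4 \<Rightarrow> real^4 \<Rightarrow> real^4" where
  "vf \<beta>h \<beta>v \<mu>h \<mu>v Cvh Chv x y = vector [
     \<beta>h - Cvh * (x$4 / (x$3 + x$4)) * x$1 - \<mu>h * x$1,
     Cvh * (y$4 / (y$3 + y$4)) * y$1 - \<mu>h * x$2,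
     \<beta>v - Chv * x$2 * x$3 - \<mu>v * x$3,
     Chv * x$2 * x$3 - \<mu>v * x$4]"

text \<open>The phase space C_+ (values outside [-tau,0] are irrelevant).\<close>
definition Cplus :: "real \<Rightarrow> (real \<Rightarrow> real^4) set" where
  "Cplus \<tau> = {\<phi>. continuous_on {-\<tau>..0} \<phi> \<and>
      (\<forall>\<theta>\<in>{-\<tau>..0}. (\<forall>i. 0 \<le> \<phi> \<theta> $ i) \<and> 0 < \<phi> \<theta> $ 3 + \<phi> \<theta> $ 4)}"

definition supdist :: "real \<Rightarrow> (real \<Rightarrow> real^4) \<Rightarrow> (real \<Rightarrow> real^4) \<Rightarrow> real" where
  "supdist \<tau> \<phi> \<psi> = (SUP \<theta>\<in>{-\<tau>..0}. norm (\<phi> \<theta> - \<psi> \<theta>))"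

definition is_solution ::
  "real \<Rightarrow> real \<Rightarrow> real \<Rightarrow> real \<Rightarrow> real \<Rightarrow> real \<Rightarrow> real \<Rightarrow> (real \<Rightarrow> real^4) \<Rightarrow> (real \<Rightarrow> real^4) \<Rightarrow> bool" where
  "is_solution \<beta>h \<beta>v \<mu>h \<mu>v Cvh Chv \<tau> \<phi> x \<longleftrightarrow>
     continuous_on {-\<tau>..} x \<and>
     (\<forall>\<theta>\<in>{-\<tau>..0}. x \<theta> = \<phi> \<theta>) \<and>
     (\<forall>t\<ge>0. (x has_vector_derivative vf \<beta>h \<beta>v \<mu>h \<mu>v Cvh Chv (x t) (x (t - \<tau>))) (at t within {0..}))"

definition globally_attractive ::
  "real \<Rightarrow> real \<Rightarrow> real \<Rightarrow> real \<Rightarrow> real \<Rightarrow> real \<Rightarrow> real \<Rightarrow> bool" where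
  "globally_attractive \<beta>h \<beta>v \<mu>h \<mu>v Cvh Chv \<tau> \<longleftrightarrow>
     (\<forall>\<phi>\<in>Cplus \<tau>. \<forall>x. is_solution \<beta>h \<beta>v \<mu>h \<mu>v Cvh Chv \<tau> \<phi> x \<longrightarrow>
        (x \<longlongrightarrow> E0 \<beta>h \<mu>h \<beta>v \<mu>v) at_top)"

definition locally_stable ::
  "real \<Rightarrow> real \<Rightarrow> real \<Rightarrow> real \<Rightarrow> real \<Rightarrow> real \<Rightarrow> real \<Rightarrow> bool" where
  "locally_stable \<beta>h \<beta>v \<mu>h \<mu>v Cvh Chv \<tau> \<longleftrightarrow>
     (\<forall>\<epsilon>>0. \<exists>\<delta>>0. \<forall>\<phi>\<in>Cplus \<tau>. \<forall>x.
        supdist \<tau> \<phi> (\<lambda>_. E0 \<beta>h \<mu>h \<beta>v \<mu>v) < \<delta> \<longrightarrow>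
        is_solution \<beta>h \<beta>v \<mu>h \<mu>v Cvh Chv \<tau> \<phi> x \<longrightarrow>
        (\<forall>t\<ge>0. norm (x t - E0 \<beta>h \<mu>h \<beta>v \<mu>v) < \<epsilon>))"

definition globally_asymptotically_stable ::
  "real \<Rightarrow> real \<Rightarrow> real \<Rightarrow> real \<Rightarrow> real \<Rightarrow> real \<Rightarrow> real \<Rightarrow> bool" where
  "globally_asymptotically_stable \<beta>h \<beta>v \<mu>h \<mu>v Cvh Chv \<tau> \<longleftrightarrow>
     locally_stable \<beta>h \<beta>v \<mu>h \<mu>v Cvh Chv \<tau> \<and> globally_attractive \<beta>h \<beta>v \<mu>h \<mu>v Cvh Chv \<tau>"

end

theory Submission
  imports Defs
begin


lemma exp_decay_tendsto:
  fixes q :: real assumes "q > 0"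
  shows "((\<lambda>t. c * exp (- (q*(t-T)))) \<longlongrightarrow> 0) at_top"
proof -
  have "filterlim (\<lambda>t. (-T) + t) at_top at_top"
    by (rule filterlim_tendsto_add_at_top[OF tendsto_const filterlim_ident])
  then have "filterlim (\<lambda>t. q * ((-T) + t)) at_top at_top"
    by (rule filterlim_tendsto_pos_mult_at_top[OF tendsto_const assms])
  then have "filterlim (\<lambda>t. - (q * ((-T) + t))) at_bot at_top"
    by (simp add: filterlim_uminus_at_top)
  then have "filterlim (\<lambda>t. - (q*(t-T))) at_bot at_top" by simp
  then have "((\<lambda>t. exp (- (q*(t-T)))) \<longlongrightarrow> 0) at_top"
    using exp_at_bot filterlim_compose by blast
  then show ?thesis by (auto intro: tendsto_mult_right_zero)
qed

lemma cmp_upper: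
  fixes y y' :: "real \<Rightarrow> real"
  assumes cy: "continuous_on {T..} y" and q: "q > 0"
   and dy: "\<And>t. t > T \<Longrightarrow> (y has_real_derivative y' t) (at t)"
   and ineq: "\<And>t. t > T \<Longrightarrow> y' t \<le> p - q * y t"
   and t: "t \<ge> T"
  shows "y t \<le> p/q + (y T - p/q) * exp (- (q*(t-T)))"
proof -
  define z where "z = (\<lambda>u::real. (y u - p / q) * exp (q * u))"
  have "z t \<le> z T"
  proof (rule DERIV_nonpos_imp_decreasing_open[OF t])
    fix s assume s: "T < s" "s < t"
    have "(z has_real_derivative (y' s * exp (q * s) + (y s - p/q) * (exp (q * s) * q))) (at s)"
      unfolding z_def using dy[of s] s
      by (auto intro!: derivative_eq_intros)
    moreover have "y' s * exp (q * s) + (y s - p/q) * (exp (q * s) * q) = exp (q * s) * (y' s + q * y s - p)"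
      using q by (simp add: field_simps)
    moreover have "exp (q * s) * (y' s + q * y s - p) \<le> 0"
      using ineq[of s] s by (simp add: mult_nonneg_nonpos)
    ultimately show "\<exists>l. (z has_real_derivative l) (at s) \<and> l \<le> 0" by auto
  next
    show "continuous_on {T..t} z"
      unfolding z_def
      by (intro continuous_intros continuous_on_subset[OF cy]) auto
  qed
  then have "(y t - p/q) * exp (q*t) \<le> (y T - p/q) * exp (q*T)" by (simp add: z_def)
  then have "(y t - p/q) * exp (q*t) * exp (-q*t) \<le> (y T - p/q) * exp (q*T) * exp (-q*t)"
    by (intro mult_right_mono) auto
  then have "y t - p/q \<le> (y T - p/q) * exp (q*T - q*t)"
    by (simp add: mult.assoc exp_add[symmetric] exp_diff)
  moreover have "q*T - q*t = - (q*(t-T))" by (simp add: algebra_simps)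
  ultimately show ?thesis by simp
qed

lemma cmp_upper_ev:
  fixes y y' :: "real \<Rightarrow> real"
  assumes cy: "continuous_on {T..} y" and q: "q > 0"
   and dy: "\<And>t. t > T \<Longrightarrow> (y has_real_derivative y' t) (at t)"
   and ineq: "\<And>t. t > T \<Longrightarrow> y' t \<le> p - q * y t"
   and e: "e > 0"
  shows "eventually (\<lambda>t. y t \<le> p/q + e) at_top"
proof -
  have "eventually (\<lambda>t. (y T - p/q) * exp (- (q*(t-T))) < e) at_top"
    using order_tendstoD(2)[OF exp_decay_tendsto[OF q, of "y T - p/q" T] e] .
  moreover have "eventually (\<lambda>t. t \<ge> T) at_top" by (rule eventually_ge_at_top)
  ultimately show ?thesis
  proof eventually_elim
    case (elim t)
    then show ?case using cmp_upper[OF cy q dy ineq, of t] by auto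
  qed
qed

lemma cmp_lower_ev:
  fixes y y' :: "real \<Rightarrow> real"
  assumes cy: "continuous_on {T..} y" and q: "q > 0"
   and dy: "\<And>t. t > T \<Longrightarrow> (y has_real_derivative y' t) (at t)"
   and ineq: "\<And>t. t > T \<Longrightarrow> y' t \<ge> p - q * y t"
   and e: "e > 0"
  shows "eventually (\<lambda>t. y t \<ge> p/q - e) at_top"
proof -
  have "eventually (\<lambda>t. (\<lambda>t. - y t) t \<le> (-p)/q + e) at_top"
  proof (rule cmp_upper_ev[OF _ q _ _ e])
    show "continuous_on {T..} (\<lambda>t. - y t)" using cy by (intro continuous_intros)
    show "((\<lambda>t. - y t) has_real_derivative - y' t) (at t)" if "t > T" for t
      using dy[OF that] by (intro derivative_intros)
    show "- y' t \<le> - p - q * - y t" if "t > T" for t using ineq[OF that] by simp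
  qed
  then show ?thesis by eventually_elim (simp add: field_simps)
qed

lemma first_hit:
  fixes h :: "real \<Rightarrow> real"
  assumes ch: "continuous_on {0..T} h" and h0: "h 0 > 0" and ex: "t1 \<in> {0..T}" "h t1 \<le> 0"
  shows "\<exists>t0\<in>{0<..T}. h t0 = 0 \<and> (\<forall>s\<in>{0..<t0}. h s > 0)"
proof -
  define S where "S = {0..T} \<inter> h -` {..0}"
  have cS: "closed S" unfolding S_def
    by (rule continuous_closed_preimage[OF ch]) auto
  have neS: "S \<noteq> {}" using ex unfolding S_def by auto
  have bS: "bdd_below S" unfolding S_def by (auto intro: bdd_belowI[of _ 0])
  define t0 where "t0 = Inf S"
  have t0S: "t0 \<in> S" unfolding t0_def by (rule closed_contains_Inf[OF neS bS cS])
  then have t0: "0 \<le> t0" "t0 \<le> T" "h t0 \<le> 0" unfolding S_def by auto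
  have below: "h s > 0" if "s \<in> {0..<t0}" for s
  proof (rule ccontr)
    assume "\<not> h s > 0"
    then have "s \<in> S" using that t0 unfolding S_def by auto
    then have "t0 \<le> s" unfolding t0_def using bS by (rule cInf_lower)
    then show False using that by auto
  qed
  have t0pos: "t0 > 0" using t0 h0 by (cases "t0 = 0") auto
  have "\<exists>s. 0 \<le> s \<and> s \<le> t0 \<and> h s = 0"
    using IVT2'[of h t0 0 0] t0 h0 continuous_on_subset[OF ch, of "{0..t0}"] by auto
  then obtain s where s: "0 \<le> s" "s \<le> t0" "h s = 0" by auto
  have "s = t0" using below[of s] s by (cases "s < t0") auto
  then show ?thesis using s t0 t0pos below by auto
qed

lemma touch:
  fixes g :: "real \<Rightarrow> real"
  assumes dg: "(g has_real_derivative l) (at t0)" and l: "l > 0" and t0: "t0 > 0"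
    and g0: "g t0 = 0" and before: "\<forall>s\<in>{0..<t0}. g s > 0"
  shows False
proof -
  obtain d where d: "d > 0" "\<forall>h>0. h < d \<longrightarrow> g (t0 - h) < g t0"
    using DERIV_pos_inc_left[OF dg l] by blast
  define h where "h = min (d/2) (t0/2)"
  have h: "h > 0" "h < d" "h < t0" using d t0 unfolding h_def by auto
  have "g (t0 - h) < 0" using d(2) h g0 by auto
  moreover have "g (t0 - h) > 0" using before h by auto
  ultimately show False by simp
qed

lemma prod_lower:
  fixes u v e R :: real
  assumes "u \<ge> -e" "v \<ge> -e" "\<bar>u\<bar> \<le> R" "\<bar>v\<bar> \<le> R" "e \<ge> 0"
  shows "u * v \<ge> -(e * R)"
proof (cases "u \<ge> 0")
  case True
  show ?thesis
  proof (cases "v \<ge> 0")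
    case True
    with \<open>u \<ge> 0\<close> have "u * v \<ge> 0" by simp
    moreover have "e * R \<ge> 0" using assms by auto
    ultimately show ?thesis by linarith
  next
    case False
    have "u * v \<ge> u * (-e)" using True assms(2) by (intro mult_left_mono) auto
    moreover have "u * e \<le> R * e" using assms by (intro mult_right_mono) auto
    ultimately show ?thesis by (simp add: algebra_simps)
  qed
next
  case False
  show ?thesis
  proof (cases "v \<ge> 0")
    case True
    have "u * v \<ge> (-e) * v" using True assms(1) by (intro mult_right_mono) auto
    moreover have "v * e \<le> R * e" using assms by (intro mult_right_mono) auto
    ultimately show ?thesis by (simp add: algebra_simps)
  next
    case False
    with \<open>\<not> u \<ge> 0\<close> have "u * v \<ge> 0" by (simp add: mult_nonpos_nonpos)
    moreover have "e * R \<ge> 0" using assms by auto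
    ultimately show ?thesis by linarith
  qed
qed

lemma ev_T: "eventually P at_top \<Longrightarrow> \<exists>T\<ge>(0::real). \<forall>t\<ge>T. P t"
proof -
  assume "eventually P at_top"
  then obtain T where "\<forall>t\<ge>T. P t" unfolding eventually_at_top_linorder by blast
  then show ?thesis by (intro exI[of _ "max T 0"]) auto
qed

lemma ev_cont_limit:
  fixes y :: "real \<Rightarrow> real" and G :: "real \<Rightarrow> real"
  assumes H: "\<And>\<epsilon>. \<epsilon> > 0 \<Longrightarrow> \<epsilon> < zz \<Longrightarrow> eventually (\<lambda>t. y t \<le> G \<epsilon>) at_top"
    and G: "(G \<longlongrightarrow> g) (at_right 0)" and e0: "zz > 0" and eta: "\<eta> > 0"
  shows "eventually (\<lambda>t. y t \<le> g + \<eta>) at_top"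
proof -
  have "eventually (\<lambda>\<epsilon>. G \<epsilon> < g + \<eta>) (at_right 0)"
    using order_tendstoD(2)[OF G] eta by simp
  then obtain b where b: "b > 0" "\<And>\<epsilon>. \<epsilon> > 0 \<Longrightarrow> \<epsilon> < b \<Longrightarrow> G \<epsilon> < g + \<eta>"
    unfolding eventually_at_right_field by auto
  define \<epsilon> where "\<epsilon> = min b zz / 2"
  have e: "\<epsilon> > 0" "\<epsilon> < b" "\<epsilon> < zz" using b e0 unfolding \<epsilon>_def by auto
  have "eventually (\<lambda>t. y t \<le> G \<epsilon>) at_top" using H e by auto
  then show ?thesis
    by eventually_elim (use b(2)[OF e(1,2)] in linarith)
qed

lemma ev_cont_limit_lower:
  fixes y :: "real \<Rightarrow> real" and G :: "real \<Rightarrow> real"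
  assumes H: "\<And>\<epsilon>. \<epsilon> > 0 \<Longrightarrow> \<epsilon> < zz \<Longrightarrow> eventually (\<lambda>t. y t \<ge> G \<epsilon>) at_top"
    and G: "(G \<longlongrightarrow> g) (at_right 0)" and e0: "zz > 0" and eta: "\<eta> > 0"
  shows "eventually (\<lambda>t. y t \<ge> g - \<eta>) at_top"
proof -
  have "eventually (\<lambda>t. (\<lambda>t. - y t) t \<le> (-g) + \<eta>) at_top"
  proof (rule ev_cont_limit[OF _ _ e0 eta])
    show "eventually (\<lambda>t. - y t \<le> - G \<epsilon>) at_top" if "\<epsilon> > 0" "\<epsilon> < zz" for \<epsilon>
      using H[OF that] by eventually_elim simp
    show "((\<lambda>\<epsilon>. - G \<epsilon>) \<longlongrightarrow> - g) (at_right 0)" using G by (rule tendsto_minus)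
  qed
  then show ?thesis by eventually_elim simp
qed

lemma ev_tendsto:
  fixes y :: "real \<Rightarrow> real"
  assumes up: "\<And>\<eta>. \<eta> > 0 \<Longrightarrow> eventually (\<lambda>t. y t \<le> g + \<eta>) at_top"
    and lo: "\<And>\<eta>. \<eta> > 0 \<Longrightarrow> eventually (\<lambda>t. y t \<ge> g - \<eta>) at_top"
  shows "(y \<longlongrightarrow> g) at_top"
proof (rule order_tendstoI)
  fix a assume ag: "a < g"
  then have h: "(g - a)/2 > 0" by simp
  have gt: "a < g - (g - a)/2" using ag by (simp add: field_simps)
  show "eventually (\<lambda>t. a < y t) at_top"
    using lo[OF h]
  proof (rule eventually_mono)
    fix t assume "g - (g - a)/2 \<le> y t" then show "a < y t" using gt by linarith
  qed
next
  fix a assume ag: "g < a"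
  then have h: "(a - g)/2 > 0" by simp
  have gt: "g + (a - g)/2 < a" using ag by (simp add: field_simps)
  show "eventually (\<lambda>t. y t < a) at_top"
    using up[OF h]
  proof (rule eventually_mono)
    fix t assume "y t \<le> g + (a - g)/2" then show "y t < a" using gt by linarith
  qed
qed




lemma vector_4 [simp]:
 "(vector [x1,x2,x3,x4] ::('a::zero)^4)$1 = x1"
 "(vector [x1,x2,x3,x4] ::('a::zero)^4)$2 = x2"
 "(vector [x1,x2,x3,x4] ::('a::zero)^4)$3 = x3"
 "(vector [x1,x2,x3,x4] ::('a::zero)^4)$4 = x4"
  unfolding vector_def by simp_all

locale sys =
  fixes \<beta>h \<beta>v \<mu>h \<mu>v Cvh Chv \<tau> :: real and \<phi> x :: "real \<Rightarrow> real^4"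
  assumes bh: "0<\<beta>h" and bv: "0<\<beta>v" and mh: "0<\<mu>h" and mv: "0<\<mu>v"
    and cvh: "0<Cvh" and chv: "0<Chv" and tau: "0 \<le> \<tau>"
    and phi: "\<phi> \<in> Cplus \<tau>" and sol: "is_solution \<beta>h \<beta>v \<mu>h \<mu>v Cvh Chv \<tau> \<phi> x"
begin

lemma cont: "continuous_on {-\<tau>..} (\<lambda>t. x t $ i)"
  using sol unfolding is_solution_def
  using sol unfolding is_solution_def by (auto intro!: continuous_on_component)

lemma init: "t \<in> {-\<tau>..0} \<Longrightarrow> x t = \<phi> t"
  using sol unfolding is_solution_def by auto

lemma init_pos: "t \<in> {-\<tau>..0} \<Longrightarrow> 0 \<le> x t $ i"
  using phi init unfolding Cplus_def by auto

lemma init_N: "t \<in> {-\<tau>..0} \<Longrightarrow> 0 < x t $ 3 + x t $ 4"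
  using phi init unfolding Cplus_def by auto

lemma dvec: "t \<ge> 0 \<Longrightarrow> (x has_vector_derivative vf \<beta>h \<beta>v \<mu>h \<mu>v Cvh Chv (x t) (x (t - \<tau>))) (at t within {0..})"
  using sol unfolding is_solution_def by auto

lemma dcomp: assumes "t \<ge> 0"
  shows "((\<lambda>t. x t $ i) has_real_derivative (vf \<beta>h \<beta>v \<mu>h \<mu>v Cvh Chv (x t) (x (t - \<tau>))) $ i) (at t within {0..})"
  using bounded_linear.has_vector_derivative[OF bounded_linear_vec_nth dvec[OF assms], of i]
  by (simp add: has_real_derivative_iff_has_vector_derivative)

lemma dcomp_at: assumes "t > 0"
  shows "((\<lambda>t. x t $ i) has_real_derivative (vf \<beta>h \<beta>v \<mu>h \<mu>v Cvh Chv (x t) (x (t - \<tau>))) $ i) (at t)"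
proof -
  have "((\<lambda>t. x t $ i) has_real_derivative (vf \<beta>h \<beta>v \<mu>h \<mu>v Cvh Chv (x t) (x (t - \<tau>))) $ i) (at t within {0<..})"
    using dcomp[of t i] assms by (intro DERIV_subset[OF dcomp[of t i]]) auto
  then show ?thesis using assms using at_within_open[of t "{0<..}"] assms by (metis greaterThan_iff open_greaterThan)
qed

lemma vf1: "vf \<beta>h \<beta>v \<mu>h \<mu>v Cvh Chv u v $ 1 = \<beta>h - Cvh * (u$4 / (u$3 + u$4)) * u$1 - \<mu>h * u$1"
  and vf2: "vf \<beta>h \<beta>v \<mu>h \<mu>v Cvh Chv u v $ 2 = Cvh * (v$4 / (v$3 + v$4)) * v$1 - \<mu>h * u$2"
  and vf3: "vf \<beta>h \<beta>v \<mu>h \<mu>v Cvh Chv u v $ 3 = \<beta>v - Chv * u$2 * u$3 - \<mu>v * u$3"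
  and vf4: "vf \<beta>h \<beta>v \<mu>h \<mu>v Cvh Chv u v $ 4 = Chv * u$2 * u$3 - \<mu>v * u$4"
  by (simp_all add: vf_def)


abbreviation "Nstar \<equiv> \<beta>v/\<mu>v"
abbreviation "Astar \<equiv> \<beta>h/\<mu>h"

lemma N_deriv: "t \<ge> 0 \<Longrightarrow> ((\<lambda>t. x t$3 + x t$4) has_real_derivative \<beta>v - \<mu>v*(x t$3 + x t$4)) (at t within {0..})"
  using DERIV_add[OF dcomp[of t 3] dcomp[of t 4]] by (simp add: vf3 vf4 algebra_simps)

lemma N_formula: assumes "t \<ge> 0"
  shows "x t$3 + x t$4 = Nstar + (x 0$3 + x 0$4 - Nstar) * exp (-(\<mu>v*t))"
proof -
  define g where "g = (\<lambda>s. (x s$3 + x s$4 - Nstar) * exp (\<mu>v * s))"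
  have "\<exists>c. \<forall>s\<in>{0..}. g s = c"
  proof (rule has_field_derivative_zero_constant)
    show "convex {0::real..}" by (rule convex_real_interval)
    fix s :: real assume "s \<in> {0..}"
    then have s: "s \<ge> 0" by simp
    have d1: "((\<lambda>s. x s$3 + x s$4 - Nstar) has_real_derivative (\<beta>v - \<mu>v*(x s$3 + x s$4))) (at s within {0..})"
      using DERIV_diff[OF N_deriv[OF s] DERIV_const] by simp
    have d2: "((\<lambda>s. exp (\<mu>v * s)) has_real_derivative exp (\<mu>v * s) * \<mu>v) (at s within {0..})"
      by (intro derivative_eq_intros) auto
    have "(g has_real_derivative ((\<beta>v - \<mu>v*(x s$3 + x s$4)) * exp (\<mu>v * s) + exp (\<mu>v * s) * \<mu>v * (x s$3 + x s$4 - Nstar))) (at s within {0..})"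
      unfolding g_def by (rule DERIV_mult[OF d1 d2])
    moreover have "(\<beta>v - \<mu>v*(x s$3 + x s$4)) * exp (\<mu>v * s) + exp (\<mu>v * s) * \<mu>v * (x s$3 + x s$4 - Nstar) = 0"
      using mv by (simp add: field_simps)
    ultimately show "(g has_real_derivative 0) (at s within {0..})" by simp
  qed
  then obtain c where "\<forall>s\<in>{0..}. g s = c" by blast
  then have "g t = g 0" using assms by auto
  then have "(x t$3 + x t$4 - Nstar) * exp (\<mu>v * t) = x 0$3 + x 0$4 - Nstar" by (simp add: g_def)
  then have "x t$3 + x t$4 - Nstar = (x 0$3 + x 0$4 - Nstar) * exp (-(\<mu>v*t))"
    by (auto simp: exp_minus field_simps)
  then show ?thesis by simp
qed

lemma N0_pos: "0 < x 0$3 + x 0$4" using init_N[of 0] tau by auto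

definition "Nmin = min (x 0$3 + x 0$4) Nstar"
definition "Nmax = max (x 0$3 + x 0$4) Nstar"

lemma Nmin_pos: "Nmin > 0" unfolding Nmin_def using N0_pos bv mv by auto

lemma N_bounds: assumes "t \<ge> 0"
  shows "Nmin \<le> x t$3 + x t$4" "x t$3 + x t$4 \<le> Nmax"
proof -
  have e: "0 < exp (-(\<mu>v*t))" "exp (-(\<mu>v*t)) \<le> 1" using assms mv by auto
  show "Nmin \<le> x t$3 + x t$4" unfolding N_formula[OF assms] Nmin_def
  proof (cases "x 0$3 + x 0$4 \<le> Nstar")
    case True
    have "(x 0$3 + x 0$4 - Nstar) * exp (-(\<mu>v*t)) \<ge> (x 0$3 + x 0$4 - Nstar) * 1"
      using True e by (intro mult_left_mono_neg) auto
    then show "min (x 0$3 + x 0$4) Nstar \<le> Nstar + (x 0$3 + x 0$4 - Nstar) * exp (-(\<mu>v*t))" using True by simp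
  next
    case False
    then show "min (x 0$3 + x 0$4) Nstar \<le> Nstar + (x 0$3 + x 0$4 - Nstar) * exp (-(\<mu>v*t))"
      using e by simp
  qed
  show "x t$3 + x t$4 \<le> Nmax" unfolding N_formula[OF assms] Nmax_def
  proof (cases "x 0$3 + x 0$4 \<le> Nstar")
    case True
    then show "Nstar + (x 0$3 + x 0$4 - Nstar) * exp (-(\<mu>v*t)) \<le> max (x 0$3 + x 0$4) Nstar"
      using e by (simp add: mult_nonpos_nonneg)
  next
    case False
    have "(x 0$3 + x 0$4 - Nstar) * exp (-(\<mu>v*t)) \<le> (x 0$3 + x 0$4 - Nstar)"
      using mult_left_mono[OF e(2), of "x 0$3 + x 0$4 - Nstar"] False by simp
    then have "Nstar + (x 0$3 + x 0$4 - Nstar) * exp (-(\<mu>v*t)) \<le> x 0$3 + x 0$4" by linarith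
    also have "x 0$3 + x 0$4 = max (x 0$3 + x 0$4) Nstar" using False by (simp add: max_def)
    finally show "Nstar + (x 0$3 + x 0$4 - Nstar) * exp (-(\<mu>v*t)) \<le> max (x 0$3 + x 0$4) Nstar" .
  qed
qed

lemma N_pos: "t \<ge> -\<tau> \<Longrightarrow> 0 < x t$3 + x t$4"
proof (cases "t \<le> 0")
  case True
  assume "t \<ge> -\<tau>"
  with True show ?thesis using init_N[of t] by simp
next
  case False
  then show ?thesis using N_bounds(1)[of t] Nmin_pos by linarith
qed

lemma N_tendsto: "((\<lambda>t. x t$3 + x t$4) \<longlongrightarrow> Nstar) at_top"
proof -
  have "((\<lambda>t. (x 0$3 + x 0$4 - Nstar) * exp (- (\<mu>v*(t-0)))) \<longlongrightarrow> 0) at_top"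
    by (rule exp_decay_tendsto[OF mv])
  then have "((\<lambda>t. Nstar + (x 0$3 + x 0$4 - Nstar) * exp (- (\<mu>v*t))) \<longlongrightarrow> Nstar + 0) at_top"
    by (intro tendsto_add tendsto_const) simp
  moreover have "eventually (\<lambda>t. Nstar + (x 0$3 + x 0$4 - Nstar) * exp (- (\<mu>v*t)) = x t$3 + x t$4) at_top"
    using eventually_ge_at_top[of 0] by eventually_elim (rule N_formula[symmetric])
  ultimately show ?thesis by (simp add: Lim_transform_eventually)
qed


lemma cont_x: "continuous_on {-\<tau>..} x"
  using sol unfolding is_solution_def by auto

lemma nonneg_T:
  assumes T: "T > 0"
  shows "\<forall>t\<in>{0..T}. \<forall>i. x t $ i \<ge> 0"
proof -
  have "compact (x ` {-\<tau>..T})"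
    by (rule compact_continuous_image[OF continuous_on_subset[OF cont_x] compact_Icc]) auto
  then have "bounded (x ` {-\<tau>..T})" by (rule compact_imp_bounded)
  then obtain R where R: "R > 0" "\<forall>y\<in>x ` {-\<tau>..T}. norm y \<le> R" unfolding bounded_pos by blast
  have Rc: "\<bar>x t $ i\<bar> \<le> R" if "t \<in> {-\<tau>..T}" for t i
    using component_le_norm_cart[of "x t" i] R(2) that by force
  define K where "K = Cvh*R/Nmin + Chv*R + 1"
  have Kpos: "K > 0" unfolding K_def using R cvh chv Nmin_pos by (simp add: add_pos_nonneg)
  have main: "\<forall>t\<in>{0..T}. \<forall>i. x t $ i + \<eta>*exp(K*t) > 0" if eta: "\<eta> > 0" for \<eta>
  proof (rule ccontr)
    assume "\<not> (\<forall>t\<in>{0..T}. \<forall>i. x t $ i + \<eta>*exp(K*t) > 0)"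
    then obtain t1 i1 where t1: "t1 \<in> {0..T}" "x t1 $ i1 + \<eta>*exp(K*t1) \<le> 0" by (metis not_less)
    define h where "h = (\<lambda>t. min (min (x t$1) (x t$2)) (min (x t$3) (x t$4)) + \<eta>*exp(K*t))"
    have hle: "h t \<le> x t $ i + \<eta>*exp(K*t)" for t i
      using exhaust_4[of i] unfolding h_def by auto
    have ch: "continuous_on {0..T} h"
      unfolding h_def
      using tau by (intro continuous_intros continuous_on_subset[OF cont_x]) auto
    have h0: "h 0 > 0"
    proof -
      have "x 0 $ i \<ge> 0" for i using init_pos[of 0] tau by auto
      then have "min (min (x 0$1) (x 0$2)) (min (x 0$3) (x 0$4)) \<ge> 0" by simp
      moreover have "h 0 = min (min (x 0$1) (x 0$2)) (min (x 0$3) (x 0$4)) + \<eta>" unfolding h_def by simp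
      ultimately show ?thesis using eta by linarith
    qed
    have "h t1 \<le> 0" using hle[of t1 i1] t1 by linarith
    from first_hit[OF ch h0 t1(1) this]
    obtain t0 where t0: "t0 \<in> {0<..T}" "h t0 = 0" "\<forall>s\<in>{0..<t0}. h s > 0" by blast
    define E0 where "E0 = \<eta>*exp(K*t0)"
    have E0pos: "E0 > 0" unfolding E0_def using eta by simp
    have before: "\<forall>s\<in>{0..<t0}. x s $ i + \<eta>*exp(K* s) > 0" for i
      using t0(3) hle[of _ i] by (meson less_le_trans)
    have att0: "x t0 $ i + E0 \<ge> 0" for i
      using t0(2) hle[of t0 i] unfolding E0_def by linarith
    have lowE: "x s $ i \<ge> -E0" if s: "s \<in> {-\<tau>..t0}" for s i
    proof (cases "s \<le> 0")
      case True
      then have "x s $ i \<ge> 0" using init_pos[of s] s by auto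
      then show ?thesis using E0pos by linarith
    next
      case False
      show ?thesis
      proof (cases "s = t0")
        case True then show ?thesis using att0[of i] by simp
      next
        case False
        with \<open>\<not> s \<le> 0\<close> s have "s \<in> {0..<t0}" by auto
        then have "x s $ i + \<eta>*exp(K* s) > 0" using before by blast
        moreover have "\<eta>*exp(K* s) \<le> E0" unfolding E0_def using eta Kpos s by (auto intro: mult_left_mono)
        ultimately show ?thesis by linarith
      qed
    qed
    have Rt0: "\<bar>x s $ i\<bar> \<le> R" if "s \<in> {-\<tau>..t0}" for s i
      using Rc that t0 by auto
    have "\<exists>i. x t0 $ i + E0 = 0"
    proof -
      have "min (min (x t0$1) (x t0$2)) (min (x t0$3) (x t0$4)) = -E0"
        using t0(2) unfolding h_def E0_def by linarith
      then have "x t0 $ 1 + E0 = 0 \<or> x t0 $ 2 + E0 = 0 \<or> x t0 $ 3 + E0 = 0 \<or> x t0 $ 4 + E0 = 0"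
        by (auto simp: min_def split: if_splits)
      then show ?thesis by blast
    qed
    then obtain i where i: "x t0 $ i + E0 = 0" by blast
    have t0pos: "t0 > 0" using t0 by auto
    let ?u = "x t0" and ?v = "x (t0 - \<tau>)"
    have Nt0: "Nmin \<le> ?u$3 + ?u$4" using N_bounds(1)[of t0] t0pos by simp
    have dg: "((\<lambda>s. x s $ i + \<eta>*exp(K* s)) has_real_derivative
        (vf \<beta>h \<beta>v \<mu>h \<mu>v Cvh Chv ?u ?v $ i + \<eta>*(exp(K*t0)*K))) (at t0)"
      by (intro DERIV_add dcomp_at t0pos DERIV_cmult) (auto intro!: derivative_eq_intros)
    have Ke: "\<eta>*(exp(K*t0)*K) = (Cvh*R/Nmin)*E0 + (Chv*R)*E0 + E0"
      unfolding E0_def K_def by (simp add: algebra_simps)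
    have pos: "vf \<beta>h \<beta>v \<mu>h \<mu>v Cvh Chv ?u ?v $ i + \<eta>*(exp(K*t0)*K) > 0"
    proof -
      have u_low: "?u $ j \<ge> -E0" for j using lowE[of t0 j] t0pos tau by auto
      have u_abs: "\<bar>?u $ j\<bar> \<le> R" for j using Rt0[of t0 j] t0pos tau by auto
      consider "i = 1" | "i = 2" | "i = 3" | "i = 4" using exhaust_4 by blast
      then show ?thesis
      proof cases
        case 1
        have ui: "?u$1 = -E0" using i 1 by (simp add: eq_neg_iff_add_eq_0)
        have "\<bar>?u$4 / (?u$3 + ?u$4)\<bar> \<le> R / Nmin"
        proof -
          have "\<bar>?u$4 / (?u$3 + ?u$4)\<bar> = \<bar>?u$4\<bar> / (?u$3 + ?u$4)" using Nt0 Nmin_pos by simp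
          also have "\<dots> \<le> R / (?u$3 + ?u$4)" using u_abs[of 4] Nt0 Nmin_pos by (intro divide_right_mono) auto
          also have "\<dots> \<le> R / Nmin" using Nt0 Nmin_pos R by (intro divide_left_mono) auto
          finally show ?thesis .
        qed
        then have q: "?u$4 / (?u$3 + ?u$4) \<ge> - (R / Nmin)" by linarith
        have "Cvh * (?u$4 / (?u$3 + ?u$4)) * E0 \<ge> Cvh * (- (R / Nmin)) * E0"
          using q cvh E0pos by (intro mult_right_mono mult_left_mono) auto
        then have "Cvh * (?u$4 / (?u$3 + ?u$4)) * E0 \<ge> - ((Cvh*R/Nmin)*E0)" by simp
        moreover have "vf \<beta>h \<beta>v \<mu>h \<mu>v Cvh Chv ?u ?v $ i = \<beta>h + Cvh * (?u$4 / (?u$3 + ?u$4)) * E0 + \<mu>h * E0"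
          using 1 ui by (simp add: vf1)
        moreover have "\<mu>h * E0 > 0" "(Chv*R)*E0 \<ge> 0" using mh E0pos chv R by auto
        ultimately show ?thesis using Ke bh E0pos by linarith
      next
        case 2
        have ui: "?u$2 = -E0" using i 2 by (simp add: eq_neg_iff_add_eq_0)
        have F: "Cvh * (?v$4 / (?v$3 + ?v$4)) * ?v$1 \<ge> - ((Cvh*R/Nmin)*E0)"
        proof (cases "t0 - \<tau> \<le> 0")
          case True
          then have vin: "t0 - \<tau> \<in> {-\<tau>..0}" using t0pos by auto
          have "?v$4 \<ge> 0" "?v$1 \<ge> 0" using init_pos[OF vin] by auto
          moreover have "?v$3 + ?v$4 > 0" using init_N[OF vin] .
          ultimately have "Cvh * (?v$4 / (?v$3 + ?v$4)) * ?v$1 \<ge> 0" using cvh by simp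
          moreover have "(Cvh*R/Nmin)*E0 \<ge> 0" using cvh R Nmin_pos E0pos by simp
          ultimately show ?thesis by linarith
        next
          case False
          then have vin: "t0 - \<tau> \<in> {-\<tau>..t0}" "t0 - \<tau> \<ge> 0" using tau by auto
          have Nv: "Nmin \<le> ?v$3 + ?v$4" using N_bounds(1)[OF vin(2)] .
          have pl: "?v$4 * ?v$1 \<ge> -(E0 * R)"
            using prod_lower[OF lowE[OF vin(1)] lowE[OF vin(1)] Rt0[OF vin(1)] Rt0[OF vin(1)]] E0pos by auto
          have "Cvh * (?v$4 / (?v$3 + ?v$4)) * ?v$1 = Cvh * ((?v$4 * ?v$1) / (?v$3 + ?v$4))" by simp
          also have "(?v$4 * ?v$1) / (?v$3 + ?v$4) \<ge> -(E0 * R) / (?v$3 + ?v$4)"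
            using pl Nv Nmin_pos by (intro divide_right_mono) auto
          moreover have "-(E0 * R) / (?v$3 + ?v$4) \<ge> -(E0 * R) / Nmin"
            using Nv Nmin_pos E0pos R by (auto intro!: divide_left_mono simp: mult_pos_pos)
          ultimately have "Cvh * ((?v$4 * ?v$1) / (?v$3 + ?v$4)) \<ge> Cvh * (-(E0 * R) / Nmin)"
            using cvh by (intro mult_left_mono) auto
          then show ?thesis using \<open>Cvh * (?v$4 / (?v$3 + ?v$4)) * ?v$1 = _\<close> by (simp add: algebra_simps)
        qed
        moreover have "vf \<beta>h \<beta>v \<mu>h \<mu>v Cvh Chv ?u ?v $ i = Cvh * (?v$4 / (?v$3 + ?v$4)) * ?v$1 + \<mu>h * E0"
          using 2 ui by (simp add: vf2)
        moreover have "\<mu>h * E0 > 0" "(Chv*R)*E0 \<ge> 0" using mh E0pos chv R by auto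
        ultimately show ?thesis using Ke E0pos by linarith
      next
        case 3
        have ui: "?u$3 = -E0" using i 3 by (simp add: eq_neg_iff_add_eq_0)
        have "?u$2 \<ge> -R" using u_abs[of 2] by linarith
        then have "Chv * ?u$2 * E0 \<ge> Chv * (-R) * E0" using chv E0pos by (intro mult_right_mono mult_left_mono) auto
        moreover have "vf \<beta>h \<beta>v \<mu>h \<mu>v Cvh Chv ?u ?v $ i = \<beta>v + Chv * ?u$2 * E0 + \<mu>v * E0"
          using 3 ui by (simp add: vf3)
        moreover have "\<mu>v * E0 > 0" "(Cvh*R/Nmin)*E0 \<ge> 0" using mv E0pos cvh R Nmin_pos by auto
        ultimately show ?thesis using Ke bv E0pos by (simp add: algebra_simps)
      next
        case 4
        have ui: "?u$4 = -E0" using i 4 by (simp add: eq_neg_iff_add_eq_0)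
        have pl: "?u$2 * ?u$3 \<ge> -(E0 * R)"
          using prod_lower[OF u_low u_low u_abs u_abs] E0pos by auto
        then have "Chv * (?u$2 * ?u$3) \<ge> Chv * (-(E0 * R))" using chv by (intro mult_left_mono) auto
        moreover have "vf \<beta>h \<beta>v \<mu>h \<mu>v Cvh Chv ?u ?v $ i = Chv * (?u$2 * ?u$3) + \<mu>v * E0"
          using 4 ui by (simp add: vf4)
        moreover have "\<mu>v * E0 > 0" "(Cvh*R/Nmin)*E0 \<ge> 0" using mv E0pos cvh R Nmin_pos by auto
        ultimately show ?thesis using Ke E0pos by (simp add: algebra_simps)
      qed
    qed
    have "x t0 $ i + \<eta>*exp(K*t0) = 0" using i unfolding E0_def .
    from touch[OF dg pos t0pos this before]
    show False .
  qed
  show ?thesis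
  proof (intro ballI allI)
    fix t i assume t: "t \<in> {0..T}"
    show "x t $ i \<ge> 0"
    proof (rule ccontr)
      assume neg: "\<not> x t $ i \<ge> 0"
      define \<eta> where "\<eta> = - x t $ i / (2 * exp (K*t))"
      have eta: "\<eta> > 0" unfolding \<eta>_def using neg by (intro divide_pos_pos) auto
      have "\<eta> * exp (K*t) = - x t $ i / 2" unfolding \<eta>_def by simp
      moreover have "x t $ i + \<eta>*exp(K*t) > 0" using main[OF eta] t by blast
      ultimately show False using neg by linarith
    qed
  qed
qed

lemma nonneg: assumes "t \<ge> -\<tau>" shows "x t $ i \<ge> 0"
proof (cases "t \<le> 0")
  case True then show ?thesis using init_pos[of t] assms by auto
next
  case False then show ?thesis using nonneg_T[of t] by auto
qed

end



context sys begin

lemma cont0: "continuous_on {T..} (\<lambda>t. x t $ i)" if "T \<ge> 0" for T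
  using continuous_on_subset[OF cont[of i]] that tau by auto

lemma a_upper: "\<eta> > 0 \<Longrightarrow> eventually (\<lambda>t. x t $ 1 \<le> Astar + \<eta>) at_top"
proof -
  assume eta: "\<eta> > 0"
  show ?thesis
  proof (rule cmp_upper_ev[OF cont0[of 0] mh _ _ eta, where y' = "\<lambda>t. vf \<beta>h \<beta>v \<mu>h \<mu>v Cvh Chv (x t) (x (t - \<tau>)) $ 1"])
    show "((\<lambda>t. x t $ 1) has_real_derivative vf \<beta>h \<beta>v \<mu>h \<mu>v Cvh Chv (x t) (x (t - \<tau>)) $ 1) (at t)" if "t > 0" for t
      using dcomp_at[OF that] .
    show "vf \<beta>h \<beta>v \<mu>h \<mu>v Cvh Chv (x t) (x (t - \<tau>)) $ 1 \<le> \<beta>h - \<mu>h * x t $ 1" if t: "t > 0" for t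
    proof -
      have "0 \<le> Cvh * (x t $ 4 / (x t $ 3 + x t $ 4)) * x t $ 1"
        using nonneg[of t 4] nonneg[of t 3] nonneg[of t 1] t tau cvh by simp
      then show ?thesis by (simp add: vf1)
    qed
  qed simp
qed

lemma d_le_N: "t \<ge> 0 \<Longrightarrow> x t $ 4 \<le> Nmax"
  using N_bounds(2)[of t] nonneg[of t 3] tau by simp

lemma N_lower_ev: "\<epsilon> > 0 \<Longrightarrow> eventually (\<lambda>t. Nstar - \<epsilon> < x t $ 3 + x t $ 4) at_top"
  using order_tendstoD(1)[OF N_tendsto, of "Nstar - \<epsilon>"] by simp

lemma N_upper_ev: "\<epsilon> > 0 \<Longrightarrow> eventually (\<lambda>t. x t $ 3 + x t $ 4 < Nstar + \<epsilon>) at_top"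
  using order_tendstoD(2)[OF N_tendsto, of "Nstar + \<epsilon>"] by simp

lemma Nstar_pos: "Nstar > 0" using bv mv by simp
lemma Astar_pos: "Astar > 0" using bh mh by simp

lemma b_step:
  assumes l: "lv \<ge> 0" and H: "\<And>\<epsilon>. \<epsilon> > 0 \<Longrightarrow> eventually (\<lambda>t. x t $ 4 \<le> lv + \<epsilon>) at_top"
    and eta: "\<eta> > 0"
  shows "eventually (\<lambda>t. x t $ 2 \<le> Cvh * lv * Astar / Nstar / \<mu>h + \<eta>) at_top"
proof (rule ev_cont_limit[OF _ _ _ eta, where zz = "Nstar/2"
      and G = "\<lambda>\<epsilon>. Cvh * (lv + \<epsilon>) * (Astar + \<epsilon>) / (Nstar - \<epsilon>) / \<mu>h + \<epsilon>"])
  show "Nstar / 2 > 0" using Nstar_pos by simp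
  have "((\<lambda>\<epsilon>. Cvh * (lv + \<epsilon>) * (Astar + \<epsilon>) / (Nstar - \<epsilon>) / \<mu>h + \<epsilon>) \<longlongrightarrow>
      Cvh * (lv + 0) * (Astar + 0) / (Nstar - 0) / \<mu>h + 0) (at_right 0)"
    using Nstar_pos mh by (intro tendsto_intros) auto
  then show "((\<lambda>\<epsilon>. Cvh * (lv + \<epsilon>) * (Astar + \<epsilon>) / (Nstar - \<epsilon>) / \<mu>h + \<epsilon>) \<longlongrightarrow>
      Cvh * lv * Astar / Nstar / \<mu>h) (at_right 0)" by simp
next
  fix \<epsilon> :: real assume e: "\<epsilon> > 0" "\<epsilon> < Nstar / 2"
  have "eventually (\<lambda>t. x t $ 4 \<le> lv + \<epsilon> \<and> x t $ 1 \<le> Astar + \<epsilon> \<and> Nstar - \<epsilon> < x t $ 3 + x t $ 4) at_top"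
    using H[OF e(1)] a_upper[OF e(1)] N_lower_ev[OF e(1)] by (intro eventually_conj)
  then obtain T where T: "T \<ge> 0" "\<And>t. t \<ge> T \<Longrightarrow> x t $ 4 \<le> lv + \<epsilon> \<and> x t $ 1 \<le> Astar + \<epsilon> \<and> Nstar - \<epsilon> < x t $ 3 + x t $ 4"
    using ev_T by blast
  define p where "p = Cvh * (lv + \<epsilon>) * (Astar + \<epsilon>) / (Nstar - \<epsilon>)"
  have "eventually (\<lambda>t. x t $ 2 \<le> p / \<mu>h + \<epsilon>) at_top"
  proof (rule cmp_upper_ev[OF cont0[of "T + \<tau>"] mh _ _ e(1), where y' = "\<lambda>t. vf \<beta>h \<beta>v \<mu>h \<mu>v Cvh Chv (x t) (x (t - \<tau>)) $ 2"])
    show "T + \<tau> \<ge> 0" using T tau by simp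
    show "((\<lambda>t. x t $ 2) has_real_derivative vf \<beta>h \<beta>v \<mu>h \<mu>v Cvh Chv (x t) (x (t - \<tau>)) $ 2) (at t)" if "t > T + \<tau>" for t
      using dcomp_at that T tau by simp
    show "vf \<beta>h \<beta>v \<mu>h \<mu>v Cvh Chv (x t) (x (t - \<tau>)) $ 2 \<le> p - \<mu>h * x t $ 2" if t: "t > T + \<tau>" for t
    proof -
      let ?v = "x (t - \<tau>)"
      have s: "t - \<tau> \<ge> T" using t by simp
      have bnd: "?v $ 4 \<le> lv + \<epsilon>" "?v $ 1 \<le> Astar + \<epsilon>" "Nstar - \<epsilon> < ?v $ 3 + ?v $ 4" using T(2)[OF s] by auto
      have nn: "?v $ 4 \<ge> 0" "?v $ 1 \<ge> 0" using nonneg s T tau by auto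
      have "?v $ 4 * ?v $ 1 \<le> (lv + \<epsilon>) * (Astar + \<epsilon>)"
        using bnd nn by (intro mult_mono) auto
      moreover have "Nstar - \<epsilon> > 0" using e by simp
      ultimately have "(?v $ 4 * ?v $ 1) / (?v $ 3 + ?v $ 4) \<le> ((lv + \<epsilon>) * (Astar + \<epsilon>)) / (Nstar - \<epsilon>)"
        using bnd nn l e by (intro frac_le) auto
      then have "Cvh * ((?v $ 4 * ?v $ 1) / (?v $ 3 + ?v $ 4)) \<le> Cvh * (((lv + \<epsilon>) * (Astar + \<epsilon>)) / (Nstar - \<epsilon>))"
        using cvh by (intro mult_left_mono) auto
      then have "Cvh * (?v $ 4 / (?v $ 3 + ?v $ 4)) * ?v $ 1 \<le> p" unfolding p_def by simp
      then show ?thesis by (simp add: vf2)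
    qed
  qed
  then show "eventually (\<lambda>t. x t $ 2 \<le> Cvh * (lv + \<epsilon>) * (Astar + \<epsilon>) / (Nstar - \<epsilon>) / \<mu>h + \<epsilon>) at_top"
    unfolding p_def .
qed

lemma d_step:
  assumes bt: "bt \<ge> 0" and H: "\<And>\<epsilon>. \<epsilon> > 0 \<Longrightarrow> eventually (\<lambda>t. x t $ 2 \<le> bt + \<epsilon>) at_top"
    and eta: "\<eta> > 0"
  shows "eventually (\<lambda>t. x t $ 4 \<le> Chv * bt * Nstar / (Chv * bt + \<mu>v) + \<eta>) at_top"
proof (rule ev_cont_limit[OF _ _ _ eta, where zz = 1
      and G = "\<lambda>\<epsilon>. Chv * (bt + \<epsilon>) * (Nstar + \<epsilon>) / (Chv * (bt + \<epsilon>) + \<mu>v) + \<epsilon>"])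
  have "Chv * bt \<ge> 0" using chv bt by simp
  then have "Chv * (bt + 0) + \<mu>v \<noteq> 0" using mv by simp
  then have "((\<lambda>\<epsilon>. Chv * (bt + \<epsilon>) * (Nstar + \<epsilon>) / (Chv * (bt + \<epsilon>) + \<mu>v) + \<epsilon>) \<longlongrightarrow>
      Chv * (bt + 0) * (Nstar + 0) / (Chv * (bt + 0) + \<mu>v) + 0) (at_right 0)"
    by (intro tendsto_intros) auto
  then show "((\<lambda>\<epsilon>. Chv * (bt + \<epsilon>) * (Nstar + \<epsilon>) / (Chv * (bt + \<epsilon>) + \<mu>v) + \<epsilon>) \<longlongrightarrow>
      Chv * bt * Nstar / (Chv * bt + \<mu>v)) (at_right 0)" by simp
next
  fix \<epsilon> :: real assume e: "\<epsilon> > 0" "\<epsilon> < 1"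
  have "eventually (\<lambda>t. x t $ 2 \<le> bt + \<epsilon> \<and> x t $ 3 + x t $ 4 < Nstar + \<epsilon>) at_top"
    using H[OF e(1)] N_upper_ev[OF e(1)] by (intro eventually_conj)
  then obtain T where T: "T \<ge> 0" "\<And>t. t \<ge> T \<Longrightarrow> x t $ 2 \<le> bt + \<epsilon> \<and> x t $ 3 + x t $ 4 < Nstar + \<epsilon>"
    using ev_T by blast
  define p where "p = Chv * (bt + \<epsilon>) * (Nstar + \<epsilon>)"
  define q where "q = Chv * (bt + \<epsilon>) + \<mu>v"
  have q: "q > 0" unfolding q_def using chv bt e mv by (simp add: add_nonneg_pos)
  have "eventually (\<lambda>t. x t $ 4 \<le> p / q + \<epsilon>) at_top"
  proof (rule cmp_upper_ev[OF cont0[OF T(1)] q _ _ e(1), where y' = "\<lambda>t. vf \<beta>h \<beta>v \<mu>h \<mu>v Cvh Chv (x t) (x (t - \<tau>)) $ 4"])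
    show "((\<lambda>t. x t $ 4) has_real_derivative vf \<beta>h \<beta>v \<mu>h \<mu>v Cvh Chv (x t) (x (t - \<tau>)) $ 4) (at t)" if "t > T" for t
      using dcomp_at that T by simp
    show "vf \<beta>h \<beta>v \<mu>h \<mu>v Cvh Chv (x t) (x (t - \<tau>)) $ 4 \<le> p - q * x t $ 4" if t: "t > T" for t
    proof -
      have bnd: "x t $ 2 \<le> bt + \<epsilon>" "x t $ 3 + x t $ 4 < Nstar + \<epsilon>" using T(2)[of t] t by auto
      have nn: "x t $ 3 \<ge> 0" "x t $ 2 \<ge> 0" using nonneg t T tau by auto
      have "x t $ 2 * x t $ 3 \<le> (bt + \<epsilon>) * x t $ 3" using bnd nn by (intro mult_right_mono) auto
      also have "\<dots> \<le> (bt + \<epsilon>) * (Nstar + \<epsilon> - x t $ 4)" using bnd bt e by (intro mult_left_mono) auto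
      finally have "Chv * (x t $ 2 * x t $ 3) \<le> Chv * ((bt + \<epsilon>) * (Nstar + \<epsilon> - x t $ 4))"
        using chv by (intro mult_left_mono) auto
      moreover have "p - q * x t $ 4 = Chv * ((bt + \<epsilon>) * (Nstar + \<epsilon> - x t $ 4)) - \<mu>v * x t $ 4"
        unfolding p_def q_def using mv by (simp add: field_simps)
      moreover have "vf \<beta>h \<beta>v \<mu>h \<mu>v Cvh Chv (x t) (x (t - \<tau>)) $ 4 = Chv * (x t $ 2 * x t $ 3) - \<mu>v * x t $ 4"
        by (simp add: vf4)
      ultimately show ?thesis by linarith
    qed
  qed
  then show "eventually (\<lambda>t. x t $ 4 \<le> Chv * (bt + \<epsilon>) * (Nstar + \<epsilon>) / (Chv * (bt + \<epsilon>) + \<mu>v) + \<epsilon>) at_top"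
    unfolding p_def q_def .
qed (simp)

lemma d_zero:
  assumes R: "Cvh * Chv * \<beta>h \<le> \<mu>h\<^sup>2 * \<mu>v"
  shows "\<eta> > 0 \<Longrightarrow> eventually (\<lambda>t. x t $ 4 \<le> \<eta>) at_top"
proof -
  define Ds where "Ds = {M. eventually (\<lambda>t. x t $ 4 \<le> M) at_top}"
  define L where "L = Inf Ds"
  have "eventually (\<lambda>t. x t $ 4 \<le> Nmax) at_top"
    using eventually_ge_at_top[of 0] by eventually_elim (rule d_le_N)
  then have neD: "Nmax \<in> Ds" unfolding Ds_def by simp
  have lowD: "0 \<le> M" if "M \<in> Ds" for M
  proof -
    from that obtain T where T: "T \<ge> 0" "\<And>t. t \<ge> T \<Longrightarrow> x t $ 4 \<le> M"
      unfolding Ds_def using ev_T by blast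
    have "0 \<le> x T $ 4" using nonneg[of T 4] T tau by simp
    then show ?thesis using T(2)[of T] by simp
  qed
  have bD: "bdd_below Ds" by (rule bdd_belowI[of _ 0]) (rule lowD)
  have L0: "L \<ge> 0" unfolding L_def using neD lowD by (intro cInf_greatest) auto
  have HL: "eventually (\<lambda>t. x t $ 4 \<le> L + \<epsilon>) at_top" if e: "\<epsilon> > 0" for \<epsilon>
  proof -
    have "Inf Ds < L + \<epsilon>" using e unfolding L_def by simp
    then obtain M where M: "M \<in> Ds" "M < L + \<epsilon>" using cInf_less_iff[of Ds "L + \<epsilon>"] neD bD by auto
    from M(1) have "eventually (\<lambda>t. x t $ 4 \<le> M) at_top" unfolding Ds_def by simp
    then show ?thesis by eventually_elim (use M(2) in linarith)
  qed
  define KL where "KL = Cvh * L * Astar / Nstar / \<mu>h"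
  have KL0: "KL \<ge> 0" unfolding KL_def using cvh L0 Astar_pos Nstar_pos mh bh bv mv by (intro divide_nonneg_pos mult_nonneg_nonneg) auto
  have Hb: "eventually (\<lambda>t. x t $ 2 \<le> KL + \<epsilon>) at_top" if "\<epsilon> > 0" for \<epsilon>
    unfolding KL_def by (rule b_step[OF L0 HL that])
  define F0 where "F0 = Chv * KL * Nstar / (Chv * KL + \<mu>v)"
  have Hd: "eventually (\<lambda>t. x t $ 4 \<le> F0 + \<epsilon>) at_top" if "\<epsilon> > 0" for \<epsilon>
    unfolding F0_def by (rule d_step[OF KL0 Hb that])
  have "L \<le> F0 + \<epsilon>" if "\<epsilon> > 0" for \<epsilon>
    unfolding L_def by (rule cInf_lower[OF _ bD]) (use Hd[OF that] in \<open>simp add: Ds_def\<close>)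
  then have LF: "L \<le> F0" by (rule field_le_epsilon)
  have den: "Chv * KL + \<mu>v > 0" using chv KL0 mv by (simp add: add_nonneg_pos)
  have "L * (Chv * KL + \<mu>v) \<le> Chv * KL * Nstar"
    using pos_le_divide_eq[OF den] LF unfolding F0_def by blast
  moreover have "Chv * KL * Nstar = L * (Cvh * Chv * \<beta>h / \<mu>h\<^sup>2)"
    unfolding KL_def using bv mv mh by (simp add: field_simps power2_eq_square)
  moreover have "Cvh * Chv * \<beta>h / \<mu>h\<^sup>2 \<le> \<mu>v"
    using R mh by (simp add: divide_le_eq mult.commute)
  ultimately have "L * (Chv * KL) + L * \<mu>v \<le> L * \<mu>v"
    using L0 by (smt (verit, ccfv_SIG) distrib_left mult_left_mono)
  then have LK: "L * (Chv * KL) \<le> 0" by simp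
  define cK where "cK = Chv * Cvh * Astar / Nstar / \<mu>h"
  have eqK: "L * (Chv * KL) = (L * L) * cK"
    unfolding KL_def cK_def by (simp add: algebra_simps)
  have cK: "cK > 0" unfolding cK_def using chv cvh bh bv mh mv by (intro divide_pos_pos mult_pos_pos) auto
  have "(L * L) * cK \<le> 0" using LK unfolding eqK .
  then have "L * L \<le> 0" using cK by (simp add: mult_le_0_iff)
  then have L00: "L = 0" using L0 by (simp add: mult_le_0_iff)
  show "\<eta> > 0 \<Longrightarrow> eventually (\<lambda>t. x t $ 4 \<le> \<eta>) at_top" using HL[of \<eta>] L00 by simp
qed

lemma ev_nonneg: "eventually (\<lambda>t. x t $ i \<ge> 0 - \<eta>) at_top" if "\<eta> > 0" for i \<eta>
  using eventually_ge_at_top[of 0]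
proof eventually_elim
  case (elim t) then show ?case using nonneg[of t i] tau that by simp
qed

lemma converge:
  assumes R: "Cvh * Chv * \<beta>h \<le> \<mu>h\<^sup>2 * \<mu>v"
  shows "(x \<longlongrightarrow> E0 \<beta>h \<mu>h \<beta>v \<mu>v) at_top"
proof -
  have d_up: "eventually (\<lambda>t. x t $ 4 \<le> 0 + \<eta>) at_top" if "\<eta> > 0" for \<eta>
    using d_zero[OF R that] by simp
  have d_t: "((\<lambda>t. x t $ 4) \<longlongrightarrow> 0) at_top"
    by (rule ev_tendsto[OF d_up ev_nonneg])
  have b_up: "eventually (\<lambda>t. x t $ 2 \<le> 0 + \<eta>) at_top" if "\<eta> > 0" for \<eta>
    using b_step[OF order_refl d_up that] by simp
  have b_t: "((\<lambda>t. x t $ 2) \<longlongrightarrow> 0) at_top"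
    by (rule ev_tendsto[OF b_up ev_nonneg])
  have c_t: "((\<lambda>t. x t $ 3) \<longlongrightarrow> Nstar) at_top"
    using tendsto_diff[OF N_tendsto d_t] by simp
  have a_lo: "eventually (\<lambda>t. x t $ 1 \<ge> Astar - \<eta>) at_top" if eta: "\<eta> > 0" for \<eta>
  proof (rule ev_cont_limit_lower[OF _ _ _ eta, where zz = 1
      and G = "\<lambda>\<epsilon>. (\<beta>h - Cvh * (\<epsilon> * (Astar + 1)) / (Nstar / 2)) / \<mu>h - \<epsilon>"])
    have "((\<lambda>\<epsilon>. (\<beta>h - Cvh * (\<epsilon> * (Astar + 1)) / (Nstar / 2)) / \<mu>h - \<epsilon>) \<longlongrightarrow>
        (\<beta>h - Cvh * (0 * (Astar + 1)) / (Nstar / 2)) / \<mu>h - 0) (at_right 0)"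
      using Nstar_pos mh by (intro tendsto_intros) auto
    then show "((\<lambda>\<epsilon>. (\<beta>h - Cvh * (\<epsilon> * (Astar + 1)) / (Nstar / 2)) / \<mu>h - \<epsilon>) \<longlongrightarrow> Astar) (at_right 0)"
      by simp
  next
    fix \<epsilon> :: real assume e: "\<epsilon> > 0" "\<epsilon> < 1"
    have h2: "Nstar / 2 > 0" using Nstar_pos by simp
    have "eventually (\<lambda>t. x t $ 4 \<le> 0 + \<epsilon> \<and> x t $ 1 \<le> Astar + 1 \<and> Nstar - Nstar / 2 < x t $ 3 + x t $ 4) at_top"
      using d_up[OF e(1)] a_upper[of 1] N_lower_ev[OF h2] by (intro eventually_conj) auto
    then obtain T where T: "T \<ge> 0" "\<And>t. t \<ge> T \<Longrightarrow> x t $ 4 \<le> 0 + \<epsilon> \<and> x t $ 1 \<le> Astar + 1 \<and> Nstar - Nstar / 2 < x t $ 3 + x t $ 4"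
      using ev_T by blast
    define p where "p = \<beta>h - Cvh * (\<epsilon> * (Astar + 1)) / (Nstar / 2)"
    have "eventually (\<lambda>t. x t $ 1 \<ge> p / \<mu>h - \<epsilon>) at_top"
    proof (rule cmp_lower_ev[OF cont0[OF T(1)] mh _ _ e(1), where y' = "\<lambda>t. vf \<beta>h \<beta>v \<mu>h \<mu>v Cvh Chv (x t) (x (t - \<tau>)) $ 1"])
      show "((\<lambda>t. x t $ 1) has_real_derivative vf \<beta>h \<beta>v \<mu>h \<mu>v Cvh Chv (x t) (x (t - \<tau>)) $ 1) (at t)" if "t > T" for t
        using dcomp_at that T by simp
      show "vf \<beta>h \<beta>v \<mu>h \<mu>v Cvh Chv (x t) (x (t - \<tau>)) $ 1 \<ge> p - \<mu>h * x t $ 1" if t: "t > T" for t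
      proof -
        have bnd: "x t $ 4 \<le> \<epsilon>" "x t $ 1 \<le> Astar + 1" "Nstar / 2 < x t $ 3 + x t $ 4" using T(2)[of t] t by auto
        have nn: "x t $ 4 \<ge> 0" "x t $ 1 \<ge> 0" using nonneg t T tau by auto
        have "x t $ 4 * x t $ 1 \<le> \<epsilon> * (Astar + 1)" using bnd nn e by (intro mult_mono) auto
        then have "(x t $ 4 * x t $ 1) / (x t $ 3 + x t $ 4) \<le> (\<epsilon> * (Astar + 1)) / (Nstar / 2)"
          using bnd nn e h2 Astar_pos by (intro frac_le) auto
        then have "Cvh * ((x t $ 4 * x t $ 1) / (x t $ 3 + x t $ 4)) \<le> Cvh * ((\<epsilon> * (Astar + 1)) / (Nstar / 2))"
          using cvh by (intro mult_left_mono) auto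
        then have "Cvh * (x t $ 4 / (x t $ 3 + x t $ 4)) * x t $ 1 \<le> Cvh * (\<epsilon> * (Astar + 1)) / (Nstar / 2)"
          by simp
        then show ?thesis unfolding p_def by (simp add: vf1)
      qed
    qed
    then show "eventually (\<lambda>t. x t $ 1 \<ge> (\<beta>h - Cvh * (\<epsilon> * (Astar + 1)) / (Nstar / 2)) / \<mu>h - \<epsilon>) at_top"
      unfolding p_def .
  qed simp
  have a_t: "((\<lambda>t. x t $ 1) \<longlongrightarrow> Astar) at_top"
    by (rule ev_tendsto[OF a_upper a_lo])
  show ?thesis
  proof (rule vec_tendstoI)
    fix i :: 4
    consider "i = 1" | "i = 2" | "i = 3" | "i = 4" using exhaust_4 by blast
    then show "((\<lambda>t. x t $ i) \<longlongrightarrow> E0 \<beta>h \<mu>h \<beta>v \<mu>v $ i) at_top"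
      by cases (simp_all add: E0_def a_t b_t c_t d_t)
  qed
qed

end



context sys begin

lemma E0_comp: "E0 \<beta>h \<mu>h \<beta>v \<mu>v $ 1 = Astar" "E0 \<beta>h \<mu>h \<beta>v \<mu>v $ 2 = 0"
  "E0 \<beta>h \<mu>h \<beta>v \<mu>v $ 3 = Nstar" "E0 \<beta>h \<mu>h \<beta>v \<mu>v $ 4 = 0"
  by (simp_all add: E0_def)

lemma a_deriv_ub: "t > 0 \<Longrightarrow> vf \<beta>h \<beta>v \<mu>h \<mu>v Cvh Chv (x t) (x (t - \<tau>)) $ 1 \<le> \<beta>h - \<mu>h * x t $ 1"
proof -
  assume t: "t > 0"
  have "0 \<le> Cvh * (x t $ 4 / (x t $ 3 + x t $ 4)) * x t $ 1"
    using nonneg[of t 4] nonneg[of t 3] nonneg[of t 1] t tau cvh by simp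
  then show ?thesis by (simp add: vf1)
qed

lemma local_bound:
  assumes close: "\<And>\<theta> i. \<theta> \<in> {-\<tau>..0} \<Longrightarrow> \<bar>\<phi> \<theta> $ i - E0 \<beta>h \<mu>h \<beta>v \<mu>v $ i\<bar> < \<delta>"
    and d1: "0 < \<delta>1" "\<delta>1 \<le> Nstar/4"
    and dd: "0 < \<delta>" "\<delta> \<le> \<delta>1" "\<delta> \<le> m" "\<delta> \<le> \<kappa>*m" and m: "m > 0"
    and k1: "Cvh*(Astar + \<delta>1) < \<kappa> * \<mu>h * (Nstar - 2*\<delta>1)"
    and k2: "\<kappa> * Chv * (Nstar + 2*\<delta>1) < \<mu>v"
    and t: "t \<ge> 0"
  shows "norm (x t - E0 \<beta>h \<mu>h \<beta>v \<mu>v) < 3*\<delta> + \<beta>h*(Cvh*m/(Nstar-2*\<delta>1))/\<mu>h\<^sup>2 + \<kappa>*m + 2*m"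
proof -
  have S0: "\<bar>x \<theta> $ i - E0 \<beta>h \<mu>h \<beta>v \<mu>v $ i\<bar> < \<delta>" if "\<theta> \<in> {-\<tau>..0}" for \<theta> i
    using close[OF that] init[OF that] by simp
  have S0a: "\<bar>x \<theta> $ 1 - Astar\<bar> < \<delta>" "\<bar>x \<theta> $ 2\<bar> < \<delta>" "\<bar>x \<theta> $ 3 - Nstar\<bar> < \<delta>" "\<bar>x \<theta> $ 4\<bar> < \<delta>"
    if "\<theta> \<in> {-\<tau>..0}" for \<theta>
    using S0[OF that, of 1] S0[OF that, of 2] S0[OF that, of 3] S0[OF that, of 4] by (simp_all add: E0_comp)
  have z0: "(0::real) \<in> {-\<tau>..0}" using tau by simp
  have Npos: "Nstar - 2*\<delta>1 > 0" using d1 Nstar_pos by simp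
  have S1: "\<bar>x s $ 3 + x s $ 4 - Nstar\<bar> < 2*\<delta>" if s: "s \<ge> -\<tau>" for s
  proof (cases "s \<le> 0")
    case True
    then have "s \<in> {-\<tau>..0}" using s by simp
    from S0a[OF this] show ?thesis by (simp add: abs_less_iff)
  next
    case False
    then have "x s $ 3 + x s $ 4 - Nstar = (x 0$3 + x 0$4 - Nstar) * exp (-(\<mu>v* s))"
      using N_formula[of s] by simp
    then have "\<bar>x s $ 3 + x s $ 4 - Nstar\<bar> = \<bar>x 0$3 + x 0$4 - Nstar\<bar> * exp (-(\<mu>v* s))"
      by (simp add: abs_mult)
    also have "\<dots> \<le> \<bar>x 0$3 + x 0$4 - Nstar\<bar> * 1"
      using False mv by (intro mult_left_mono) auto
    also have "\<dots> < 2*\<delta>" using S0a[OF z0] by (simp add: abs_less_iff)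
    finally show ?thesis .
  qed
  have S2: "x s $ 1 < Astar + \<delta>" if s: "s \<ge> -\<tau>" for s
  proof (cases "s \<le> 0")
    case True
    then have "s \<in> {-\<tau>..0}" using s by simp
    from S0a[OF this] show ?thesis by (simp add: abs_less_iff)
  next
    case False
    have "x s $ 1 \<le> \<beta>h/\<mu>h + (x 0 $ 1 - \<beta>h/\<mu>h) * exp (- (\<mu>h*(s-0)))"
      by (rule cmp_upper[OF cont0[of 0] mh dcomp_at a_deriv_ub]) (use False in auto)
    moreover have "(x 0 $ 1 - \<beta>h/\<mu>h) * exp (- (\<mu>h*(s-0))) < \<delta>"
    proof (cases "x 0 $ 1 \<le> \<beta>h/\<mu>h")
      case True
      then have "(x 0 $ 1 - \<beta>h/\<mu>h) * exp (- (\<mu>h*(s-0))) \<le> 0" by (intro mult_nonpos_nonneg) auto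
      then show ?thesis using dd by linarith
    next
      case False2: False
      have "(x 0 $ 1 - \<beta>h/\<mu>h) * exp (- (\<mu>h*(s-0))) \<le> (x 0 $ 1 - \<beta>h/\<mu>h) * 1"
        using False False2 mh by (intro mult_left_mono) auto
      also have "\<dots> < \<delta>" using S0a[OF z0] by (simp add: abs_less_iff)
      finally show ?thesis .
    qed
    ultimately show ?thesis by linarith
  qed
  have S3: "x s $ 2 < \<kappa>*m \<and> x s $ 4 < m" if s: "s \<ge> -\<tau>" for s
  proof (cases "s \<le> 0")
    case True
    then have "s \<in> {-\<tau>..0}" using s by simp
    from S0a[OF this] show ?thesis using dd by auto
  next
    case False
    show ?thesis
    proof (rule ccontr)
      assume contra: "\<not> (x s $ 2 < \<kappa>*m \<and> x s $ 4 < m)"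
      define h where "h = (\<lambda>t. min (\<kappa>*m - x t $ 2) (m - x t $ 4))"
      have ch: "continuous_on {0..s} h"
        unfolding h_def using tau
        by (intro continuous_intros continuous_on_subset[OF cont_x]) auto
      have h0: "h 0 > 0" using S0a[OF z0] dd unfolding h_def by auto
      have "h s \<le> 0" using contra unfolding h_def by auto
      from first_hit[OF ch h0 _ this]
      obtain t0 where t0: "t0 \<in> {0<..s}" "h t0 = 0" "\<forall>u\<in>{0..<t0}. h u > 0" using False by auto
      have t0pos: "t0 > 0" using t0 by auto
      have ub: "x u $ 2 \<le> \<kappa>*m \<and> x u $ 4 \<le> m" if u: "u \<in> {-\<tau>..t0}" for u
      proof (cases "u \<le> 0")
        case True
        then have "u \<in> {-\<tau>..0}" using u by simp
        from S0a[OF this] show ?thesis using dd by auto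
      next
        case False
        show ?thesis
        proof (cases "u = t0")
          case True then show ?thesis using t0(2) unfolding h_def by auto
        next
          case False
          with \<open>\<not> u \<le> 0\<close> u have "u \<in> {0..<t0}" by auto
          then have "h u > 0" using t0(3) by blast
          then show ?thesis unfolding h_def by auto
        qed
      qed
      let ?u = "x t0" and ?v = "x (t0 - \<tau>)"
      have vin: "t0 - \<tau> \<in> {-\<tau>..t0}" using tau t0pos by auto
      have vge: "t0 - \<tau> \<ge> -\<tau>" using t0pos by simp
      have "\<kappa>*m - x t0 $ 2 = 0 \<or> m - x t0 $ 4 = 0"
        using t0(2) unfolding h_def by (auto simp: min_def split: if_splits)
      then show False
      proof
        assume eq: "\<kappa>*m - x t0 $ 2 = 0"
        define g where "g = (\<lambda>u. \<kappa>*m - x u $ 2)"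
        have before: "\<forall>u\<in>{0..<t0}. g u > 0" using t0(3) unfolding h_def g_def by auto
        have dg: "(g has_real_derivative - (vf \<beta>h \<beta>v \<mu>h \<mu>v Cvh Chv ?u ?v $ 2)) (at t0)"
          unfolding g_def using DERIV_diff[OF DERIV_const dcomp_at[OF t0pos, of 2]] by simp
        have "Cvh * (?v$4 / (?v$3 + ?v$4)) * ?v$1 < \<mu>h * (\<kappa>*m)"
        proof -
          have nn: "?v$4 \<ge> 0" "?v$1 \<ge> 0" using nonneg vge by auto
          have b4: "?v$4 \<le> m" using ub[OF vin] by simp
          have b1: "?v$1 \<le> Astar + \<delta>1" using S2[OF vge] dd by simp
          have bN: "Nstar - 2*\<delta>1 \<le> ?v$3 + ?v$4" using S1[OF vge] dd by linarith
          have "?v$4 * ?v$1 \<le> m * (Astar + \<delta>1)" using nn b4 b1 by (intro mult_mono) auto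
          then have "(?v$4 * ?v$1) / (?v$3 + ?v$4) \<le> (m * (Astar + \<delta>1)) / (Nstar - 2*\<delta>1)"
            using nn bN Npos m d1 Astar_pos by (intro frac_le) auto
          then have "Cvh * ((?v$4 * ?v$1) / (?v$3 + ?v$4)) \<le> Cvh * ((m * (Astar + \<delta>1)) / (Nstar - 2*\<delta>1))"
            using cvh by (intro mult_left_mono) auto
          also have "\<dots> = m * (Cvh*(Astar + \<delta>1)) / (Nstar - 2*\<delta>1)" by (simp add: algebra_simps)
          also have "\<dots> < m * (\<kappa> * \<mu>h * (Nstar - 2*\<delta>1)) / (Nstar - 2*\<delta>1)"
            using k1 m Npos by (intro divide_strict_right_mono mult_strict_left_mono) auto
          also have "\<dots> = \<mu>h * (\<kappa>*m)" using Npos by (simp add: field_simps)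
          finally show ?thesis by simp
        qed
        then have "- (vf \<beta>h \<beta>v \<mu>h \<mu>v Cvh Chv ?u ?v $ 2) > 0" using eq by (simp add: vf2)
        moreover have "g t0 = 0" using eq unfolding g_def .
        ultimately show False using touch[OF dg _ t0pos _ before] by blast
      next
        assume eq: "m - x t0 $ 4 = 0"
        define g where "g = (\<lambda>u. m - x u $ 4)"
        have before: "\<forall>u\<in>{0..<t0}. g u > 0" using t0(3) unfolding h_def g_def by auto
        have dg: "(g has_real_derivative - (vf \<beta>h \<beta>v \<mu>h \<mu>v Cvh Chv ?u ?v $ 4)) (at t0)"
          unfolding g_def using DERIV_diff[OF DERIV_const dcomp_at[OF t0pos, of 4]] by simp
        have "Chv * ?u$2 * ?u$3 < \<mu>v * m"
        proof -
          have uin: "t0 \<in> {-\<tau>..t0}" using tau t0pos by auto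
          have nn: "?u$2 \<ge> 0" "?u$3 \<ge> 0" "?u$4 \<ge> 0" using nonneg t0pos tau by auto
          have b2: "?u$2 \<le> \<kappa>*m" using ub[OF uin] by simp
          have b3: "?u$3 \<le> Nstar + 2*\<delta>1" using S1[of t0] t0pos tau nn dd by (auto simp: abs_less_iff)
          have "?u$2 * ?u$3 \<le> (\<kappa>*m) * (Nstar + 2*\<delta>1)" using nn b2 b3 by (intro mult_mono) auto
          then have "Chv * (?u$2 * ?u$3) \<le> Chv * ((\<kappa>*m) * (Nstar + 2*\<delta>1))" using chv by (intro mult_left_mono) auto
          also have "\<dots> = m * (\<kappa> * Chv * (Nstar + 2*\<delta>1))" by (simp add: algebra_simps)
          also have "\<dots> < m * \<mu>v" using k2 m by (intro mult_strict_left_mono) auto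
          finally show ?thesis by (simp add: algebra_simps)
        qed
        then have "- (vf \<beta>h \<beta>v \<mu>h \<mu>v Cvh Chv ?u ?v $ 4) > 0" using eq by (simp add: vf4)
        moreover have "g t0 = 0" using eq unfolding g_def .
        ultimately show False using touch[OF dg _ t0pos _ before] by blast
      qed
    qed
  qed
  define sq where "sq = Cvh*m/(Nstar-2*\<delta>1)"
  have sq0: "sq > 0" unfolding sq_def using cvh m Npos by simp
  define q where "q = \<mu>h + sq"
  have q0: "q > 0" unfolding q_def using mh sq0 by simp
  have S4: "x s $ 1 \<ge> min (x 0 $ 1) (\<beta>h/q)" if s: "s \<ge> 0" for s
  proof (cases "s = 0")
    case True then show ?thesis by simp
  next
    case False
    have "(\<lambda>t. - x t $ 1) s \<le> (-\<beta>h)/q + ((\<lambda>t. - x t $ 1) 0 - (-\<beta>h)/q) * exp (- (q*(s-0)))"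
    proof (rule cmp_upper[OF _ q0, where y' = "\<lambda>t. - (vf \<beta>h \<beta>v \<mu>h \<mu>v Cvh Chv (x t) (x (t - \<tau>)) $ 1)"])
      show "continuous_on {0..} (\<lambda>t. - x t $ 1)" by (rule continuous_on_minus[OF cont0[of 0]]) simp
      show "((\<lambda>t. - x t $ 1) has_real_derivative - (vf \<beta>h \<beta>v \<mu>h \<mu>v Cvh Chv (x t) (x (t - \<tau>)) $ 1)) (at t)"
        if "t > 0" for t using dcomp_at[OF that] by (intro derivative_intros)
      show "- (vf \<beta>h \<beta>v \<mu>h \<mu>v Cvh Chv (x t) (x (t - \<tau>)) $ 1) \<le> - \<beta>h - q * (- x t $ 1)" if t: "t > 0" for t
      proof -
        have tt: "t \<ge> -\<tau>" using t tau by simp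
        have nn: "x t $ 4 \<ge> 0" "x t $ 1 \<ge> 0" using nonneg tt by auto
        have b4: "x t $ 4 \<le> m" using S3[OF tt] by simp
        have bN: "Nstar - 2*\<delta>1 \<le> x t $ 3 + x t $ 4" using S1[OF tt] dd by linarith
        have "x t $ 4 / (x t $ 3 + x t $ 4) \<le> m / (Nstar - 2*\<delta>1)"
          using nn b4 bN Npos m by (intro frac_le) auto
        then have "Cvh * (x t $ 4 / (x t $ 3 + x t $ 4)) * x t $ 1 \<le> Cvh * (m / (Nstar - 2*\<delta>1)) * x t $ 1"
          using cvh nn by (intro mult_right_mono mult_left_mono) auto
        also have "\<dots> = sq * x t $ 1" unfolding sq_def by simp
        finally have "Cvh * (x t $ 4 / (x t $ 3 + x t $ 4)) * x t $ 1 \<le> sq * x t $ 1" .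
        then show ?thesis unfolding q_def by (simp add: vf1 algebra_simps)
      qed
    qed (use s in auto)
    then have A: "x s $ 1 \<ge> \<beta>h/q + (x 0 $ 1 - \<beta>h/q) * exp (- (q * s))" by (simp add: algebra_simps)
    show ?thesis
    proof (cases "x 0 $ 1 \<ge> \<beta>h/q")
      case True
      then have "(x 0 $ 1 - \<beta>h/q) * exp (- (q * s)) \<ge> 0" by simp
      then have "x s $ 1 \<ge> \<beta>h/q" using A by linarith
      then show ?thesis by (rule min.coboundedI2)
    next
      case False
      have "(x 0 $ 1 - \<beta>h/q) * exp (- (q * s)) \<ge> (x 0 $ 1 - \<beta>h/q) * 1"
        using False s q0 by (intro mult_left_mono_neg) auto
      then have "(x 0 $ 1 - \<beta>h/q) * exp (- (q * s)) \<ge> x 0 $ 1 - \<beta>h/q" by simp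
      then have "x s $ 1 \<ge> x 0 $ 1" using A by linarith
      then show ?thesis by (rule min.coboundedI1)
    qed
  qed
  have tt: "t \<ge> -\<tau>" using t tau by simp
  have Aq: "Astar - \<beta>h/q \<le> \<beta>h* sq/\<mu>h\<^sup>2"
  proof -
    have "Astar - \<beta>h/q = \<beta>h* sq/(\<mu>h*q)" unfolding q_def using mh sq0 by (simp add: field_simps)
    also have "\<dots> \<le> \<beta>h* sq/(\<mu>h*\<mu>h)" using mh sq0 bh unfolding q_def
      by (intro divide_left_mono mult_left_mono mult_pos_pos) auto
    finally show ?thesis by (simp add: power2_eq_square)
  qed
  have ea: "\<bar>x t $ 1 - Astar\<bar> < \<delta> + \<beta>h* sq/\<mu>h\<^sup>2"
  proof -
    have up: "x t $ 1 - Astar < \<delta>" using S2[OF tt] by simp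
    have "x t $ 1 \<ge> min (x 0 $ 1) (\<beta>h/q)" by (rule S4[OF t])
    moreover have "x 0 $ 1 > Astar - \<delta>" using S0a[OF z0] by (simp add: abs_less_iff)
    moreover have nn: "\<beta>h* sq/\<mu>h\<^sup>2 \<ge> 0" using bh sq0 by simp
    ultimately have lo: "Astar - x t $ 1 < \<delta> + \<beta>h* sq/\<mu>h\<^sup>2" using Aq dd by (auto simp: min_def split: if_splits)
    have up2: "x t $ 1 - Astar < \<delta> + \<beta>h* sq/\<mu>h\<^sup>2" using up nn by linarith
    show ?thesis unfolding abs_less_iff using lo up2 by linarith
  qed
  have eb: "\<bar>x t $ 2\<bar> < \<kappa>*m" using S3[OF tt] nonneg[OF tt, of 2] by simp
  have ed: "\<bar>x t $ 4\<bar> < m" using S3[OF tt] nonneg[OF tt, of 4] by simp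
  have ec: "\<bar>x t $ 3 - Nstar\<bar> < 2*\<delta> + m"
    using S1[OF tt] ed by (simp add: abs_less_iff) 
  have "norm (x t - E0 \<beta>h \<mu>h \<beta>v \<mu>v) \<le> (\<Sum>i\<in>UNIV. \<bar>(x t - E0 \<beta>h \<mu>h \<beta>v \<mu>v) $ i\<bar>)"
    by (rule norm_le_l1_cart)
  also have "\<dots> = \<bar>x t $ 1 - Astar\<bar> + \<bar>x t $ 2\<bar> + \<bar>x t $ 3 - Nstar\<bar> + \<bar>x t $ 4\<bar>"
    by (simp add: sum_4 E0_comp)
  also have "\<dots> < (\<delta> + \<beta>h* sq/\<mu>h\<^sup>2) + \<kappa>*m + (2*\<delta> + m) + m"
    using ea eb ec ed by linarith
  finally show ?thesis unfolding sq_def by (simp add: algebra_simps)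
qed

end



lemma R0_le: assumes "0 < \<beta>h" "0 < \<mu>h" "0 < \<mu>v" "0 < Cvh" "0 < Chv" "R0 \<beta>h \<mu>h \<mu>v Cvh Chv \<le> 1"
  shows "Cvh * Chv * \<beta>h \<le> \<mu>h\<^sup>2 * \<mu>v"
proof -
  have "Cvh * Chv * \<beta>h / (\<mu>h\<^sup>2 * \<mu>v) \<le> 1" using assms(6) unfolding R0_def by simp
  then show ?thesis using assms by (simp add: pos_divide_le_eq)
qed

lemma R0_lt: assumes "0 < \<beta>h" "0 < \<mu>h" "0 < \<mu>v" "0 < Cvh" "0 < Chv" "R0 \<beta>h \<mu>h \<mu>v Cvh Chv < 1"
  shows "Cvh * Chv * \<beta>h < \<mu>h\<^sup>2 * \<mu>v"
proof -
  have "Cvh * Chv * \<beta>h / (\<mu>h\<^sup>2 * \<mu>v) < 1" using assms(6) unfolding R0_def by simp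
  then show ?thesis using assms by (simp add: pos_divide_less_eq)
qed

lemma attractive:
  assumes "0 < \<beta>h" "0 < \<beta>v" "0 < \<mu>h" "0 < \<mu>v" "0 < Cvh" "0 < Chv" "0 \<le> \<tau>"
    and R: "Cvh * Chv * \<beta>h \<le> \<mu>h\<^sup>2 * \<mu>v"
  shows "globally_attractive \<beta>h \<beta>v \<mu>h \<mu>v Cvh Chv \<tau>"
  unfolding globally_attractive_def
proof (intro ballI allI impI)
  fix \<phi> x assume "\<phi> \<in> Cplus \<tau>" "is_solution \<beta>h \<beta>v \<mu>h \<mu>v Cvh Chv \<tau> \<phi> x"
  then interpret sys \<beta>h \<beta>v \<mu>h \<mu>v Cvh Chv \<tau> \<phi> x using assms by unfold_locales auto
  show "(x \<longlongrightarrow> E0 \<beta>h \<mu>h \<beta>v \<mu>v) at_top" by (rule converge[OF R])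
qed

lemma close_of_supdist:
  assumes phi: "\<phi> \<in> Cplus \<tau>" and sd: "supdist \<tau> \<phi> (\<lambda>_. e) < \<delta>" and th: "\<theta> \<in> {-\<tau>..0}"
  shows "\<bar>\<phi> \<theta> $ i - e $ i\<bar> < \<delta>"
proof -
  have c: "continuous_on {-\<tau>..0} \<phi>" using phi unfolding Cplus_def by auto
  have "compact ((\<lambda>\<theta>. norm (\<phi> \<theta> - e)) ` {-\<tau>..0})"
    by (intro compact_continuous_image continuous_intros c compact_Icc)
  then have "bdd_above ((\<lambda>\<theta>. norm (\<phi> \<theta> - e)) ` {-\<tau>..0})"
    by (intro bounded_imp_bdd_above compact_imp_bounded)
  then have "norm (\<phi> \<theta> - e) \<le> supdist \<tau> \<phi> (\<lambda>_. e)"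
    unfolding supdist_def using th by (rule cSUP_upper2) simp
  moreover have "\<bar>\<phi> \<theta> $ i - e $ i\<bar> \<le> norm (\<phi> \<theta> - e)"
    using component_le_norm_cart[of "\<phi> \<theta> - e" i] by simp
  ultimately show ?thesis using sd by linarith
qed

lemma stable:
  assumes bh: "0 < \<beta>h" and bv: "0 < \<beta>v" and mh: "0 < \<mu>h" and mv: "0 < \<mu>v"
    and cvh: "0 < Cvh" and chv: "0 < Chv" and tau: "0 \<le> \<tau>"
    and R: "Cvh * Chv * \<beta>h < \<mu>h\<^sup>2 * \<mu>v"
  shows "locally_stable \<beta>h \<beta>v \<mu>h \<mu>v Cvh Chv \<tau>"
  unfolding locally_stable_def
proof (intro allI impI)
  fix \<epsilon> :: real assume eps: "\<epsilon> > 0"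
  define NS where "NS = \<beta>v/\<mu>v"
  define AS where "AS = \<beta>h/\<mu>h"
  have NS: "NS > 0" unfolding NS_def using bv mv by simp
  have AS: "AS > 0" unfolding AS_def using bh mh by simp
  define f where "f = (\<lambda>\<delta>. (Cvh*(AS+\<delta>)) / (\<mu>h*(NS-2*\<delta>)) * (Chv*(NS+2*\<delta>)/\<mu>v))"
  have "(f \<longlongrightarrow> (Cvh*(AS+0)) / (\<mu>h*(NS-2*0)) * (Chv*(NS+2*0)/\<mu>v)) (at_right 0)"
    unfolding f_def using NS mh mv by (intro tendsto_intros) auto
  moreover have "(Cvh*(AS+0)) / (\<mu>h*(NS-2*0)) * (Chv*(NS+2*0)/\<mu>v) = Cvh * Chv * \<beta>h / (\<mu>h\<^sup>2 * \<mu>v)"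
    unfolding AS_def NS_def using bv mv mh by (simp add: field_simps power2_eq_square)
  moreover have "Cvh * Chv * \<beta>h / (\<mu>h\<^sup>2 * \<mu>v) < 1" using R mh mv by (simp add: pos_divide_less_eq)
  ultimately have "eventually (\<lambda>\<delta>. f \<delta> < 1) (at_right 0)"
    using order_tendstoD(2) by metis
  then obtain b where b: "b > 0" "\<And>\<delta>. \<delta> > 0 \<Longrightarrow> \<delta> < b \<Longrightarrow> f \<delta> < 1"
    unfolding eventually_at_right_field by auto
  define \<delta>1 where "\<delta>1 = min (b/2) (NS/4)"
  have d1: "0 < \<delta>1" "\<delta>1 \<le> NS/4" "\<delta>1 < b" using b NS unfolding \<delta>1_def by auto
  have f1: "f \<delta>1 < 1" using b(2) d1 by simp
  have Np: "NS - 2*\<delta>1 > 0" using d1 NS by simp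
  define \<alpha>1 where "\<alpha>1 = (Cvh*(AS+\<delta>1)) / (\<mu>h*(NS-2*\<delta>1))"
  define \<gamma>1 where "\<gamma>1 = Chv*(NS+2*\<delta>1)/\<mu>v"
  have a1: "\<alpha>1 > 0" unfolding \<alpha>1_def using cvh AS d1 mh Np by (intro divide_pos_pos mult_pos_pos) auto
  have g1: "\<gamma>1 > 0" unfolding \<gamma>1_def using chv NS d1 mv by (intro divide_pos_pos mult_pos_pos) auto
  have ag: "\<alpha>1 * \<gamma>1 < 1" using f1 unfolding f_def \<alpha>1_def \<gamma>1_def by simp
  then have ag': "\<alpha>1 < 1/\<gamma>1" using g1 by (simp add: pos_less_divide_eq)
  define \<kappa> where "\<kappa> = (\<alpha>1 + 1/\<gamma>1)/2"
  have ka: "\<alpha>1 < \<kappa>" "\<kappa> < 1/\<gamma>1" unfolding \<kappa>_def using ag' by (simp_all add: field_simps)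
  have kpos: "\<kappa> > 0" using a1 ka by simp
  have k1: "Cvh*(AS + \<delta>1) < \<kappa> * \<mu>h * (NS - 2*\<delta>1)"
  proof -
    have "Cvh*(AS + \<delta>1) = \<alpha>1 * (\<mu>h * (NS - 2*\<delta>1))" unfolding \<alpha>1_def using mh Np by simp
    also have "\<dots> < \<kappa> * (\<mu>h * (NS - 2*\<delta>1))" using ka mh Np by (intro mult_strict_right_mono) auto
    finally show ?thesis by (simp add: mult.assoc)
  qed
  have k2: "\<kappa> * Chv * (NS + 2*\<delta>1) < \<mu>v"
  proof -
    have "\<kappa> * \<gamma>1 < 1" using ka g1 by (simp add: pos_less_divide_eq)
    then have "\<kappa> * (Chv*(NS+2*\<delta>1)) / \<mu>v < 1" unfolding \<gamma>1_def by simp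
    then show ?thesis using mv by (simp add: pos_divide_less_eq mult.assoc)
  qed
  define Q where "Q = \<beta>h*Cvh/((NS-2*\<delta>1)*\<mu>h\<^sup>2) + \<kappa> + 2"
  have Q: "Q > 0" unfolding Q_def using bh cvh Np mh kpos by (intro add_pos_pos divide_pos_pos mult_pos_pos) auto
  define m where "m = \<epsilon> / (2 * Q)"
  have m: "m > 0" unfolding m_def using eps Q by simp
  define \<delta> where "\<delta> = min (min \<delta>1 (min m (\<kappa>*m))) (\<epsilon>/8)"
  have dd: "0 < \<delta>" "\<delta> \<le> \<delta>1" "\<delta> \<le> m" "\<delta> \<le> \<kappa>*m" "\<delta> \<le> \<epsilon>/8"
    unfolding \<delta>_def using d1 m kpos eps by auto
  have total: "3*\<delta> + \<beta>h*(Cvh*m/(NS-2*\<delta>1))/\<mu>h\<^sup>2 + \<kappa>*m + 2*m < \<epsilon>"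
  proof -
    have "\<beta>h*(Cvh*m/(NS-2*\<delta>1))/\<mu>h\<^sup>2 + \<kappa>*m + 2*m = m * Q"
      unfolding Q_def using Np mh by (simp add: field_simps)
    also have "m * Q = \<epsilon>/2" unfolding m_def using Q by simp
    finally have "\<beta>h*(Cvh*m/(NS-2*\<delta>1))/\<mu>h\<^sup>2 + \<kappa>*m + 2*m = \<epsilon>/2" .
    moreover have "3*\<delta> \<le> 3*(\<epsilon>/8)" using dd by simp
    ultimately show ?thesis using eps by (simp add: field_simps)
  qed
  show "\<exists>\<delta>>0. \<forall>\<phi>\<in>Cplus \<tau>. \<forall>x. supdist \<tau> \<phi> (\<lambda>_. E0 \<beta>h \<mu>h \<beta>v \<mu>v) < \<delta> \<longrightarrow>
          is_solution \<beta>h \<beta>v \<mu>h \<mu>v Cvh Chv \<tau> \<phi> x \<longrightarrow>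
          (\<forall>t\<ge>0. norm (x t - E0 \<beta>h \<mu>h \<beta>v \<mu>v) < \<epsilon>)"
  proof (intro exI[of _ \<delta>] conjI ballI allI impI)
    show "\<delta> > 0" by (rule dd(1))
    fix \<phi> x and t :: real
    assume phi: "\<phi> \<in> Cplus \<tau>" and sd: "supdist \<tau> \<phi> (\<lambda>_. E0 \<beta>h \<mu>h \<beta>v \<mu>v) < \<delta>"
      and sol: "is_solution \<beta>h \<beta>v \<mu>h \<mu>v Cvh Chv \<tau> \<phi> x" and t: "0 \<le> t"
    interpret sys \<beta>h \<beta>v \<mu>h \<mu>v Cvh Chv \<tau> \<phi> x
      using bh bv mh mv cvh chv tau phi sol by unfold_locales auto
    have "norm (x t - E0 \<beta>h \<mu>h \<beta>v \<mu>v) < 3*\<delta> + \<beta>h*(Cvh*m/(Nstar-2*\<delta>1))/\<mu>h\<^sup>2 + \<kappa>*m + 2*m"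
    proof (rule local_bound[OF _ _ _ dd(1-4) m _ _ t])
      show "\<bar>\<phi> \<theta> $ i - E0 \<beta>h \<mu>h \<beta>v \<mu>v $ i\<bar> < \<delta>" if "\<theta> \<in> {-\<tau>..0}" for \<theta> i
        by (rule close_of_supdist[OF phi sd that])
      show "0 < \<delta>1" using d1 by simp
      show "\<delta>1 \<le> Nstar / 4" using d1 unfolding NS_def by simp
      show "Cvh*(Astar + \<delta>1) < \<kappa> * \<mu>h * (Nstar - 2*\<delta>1)" using k1 unfolding NS_def AS_def .
      show "\<kappa> * Chv * (Nstar + 2*\<delta>1) < \<mu>v" using k2 unfolding NS_def .
    qed
    then show "norm (x t - E0 \<beta>h \<mu>h \<beta>v \<mu>v) < \<epsilon>" using total unfolding NS_def by linarith
  qed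
qed

theorem theorem5:
  fixes \<beta>h \<beta>v \<mu>h \<mu>v Cvh Chv \<tau> :: real
  assumes "0 < \<beta>h" "0 < \<beta>v" "0 < \<mu>h" "0 < \<mu>v" "0 < Cvh" "0 < Chv"
    and "0 \<le> \<tau>"
  shows "(R0 \<beta>h \<mu>h \<mu>v Cvh Chv < 1 \<longrightarrow> globally_asymptotically_stable \<beta>h \<beta>v \<mu>h \<mu>v Cvh Chv \<tau>)
       \<and> (R0 \<beta>h \<mu>h \<mu>v Cvh Chv = 1 \<longrightarrow> globally_attractive \<beta>h \<beta>v \<mu>h \<mu>v Cvh Chv \<tau>)"
proof (intro conjI impI)
  assume "R0 \<beta>h \<mu>h \<mu>v Cvh Chv < 1"
  then have lt: "Cvh * Chv * \<beta>h < \<mu>h\<^sup>2 * \<mu>v" using R0_lt assms by blast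
  then have le: "Cvh * Chv * \<beta>h \<le> \<mu>h\<^sup>2 * \<mu>v" by simp
  show "globally_asymptotically_stable \<beta>h \<beta>v \<mu>h \<mu>v Cvh Chv \<tau>"
    unfolding globally_asymptotically_stable_def
    using stable[OF assms lt] attractive[OF assms le] by blast
next
  assume "R0 \<beta>h \<mu>h \<mu>v Cvh Chv = 1"
  then have le: "Cvh * Chv * \<beta>h \<le> \<mu>h\<^sup>2 * \<mu>v" using R0_le assms by simp
  show "globally_attractive \<beta>h \<beta>v \<mu>h \<mu>v Cvh Chv \<tau>" by (rule attractive[OF assms le])
qed


end
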